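(* For every $z_0=(x_0,y_0)\in\mathbb Z_+^{n}$ and $k'\in\mathbb Z_+^{m_1}$, \[ P_0\{\tilde Z_0=z_0,\,K'=k'\mid O\}=1_{S_{y-y_0}}(k')\,\frac{P_0\{Z_0=z_0,\,R'(T)=k'\mid O_p\}}{P_0\{R'(T)\in S_{y-Y_0}\mid O_p\}}. \]
   Context: Fix integers $n_1,n_2,m_1,m_2\ge 0$ with $n=n_1+n_2$, $m=m_1+m_2$ and $n_2=m_2$, a time $T>0$, and an observation $y\in\mathbb Z_+^{n_2}$. Let $\nu\in\mathbb Z^{n\times m}$; let $\nu'$ be its first $n_1$ rows and $\nu''$ its last $n_2$ rows, and assume $\nu''=[A\;B]$ with $A\in\mathbb Z^{n_2\times m_1}$ and $B\in\mathbb Z^{m_2\times m_2}$ invertible. For $\Delta y\in\mathbb Z^{n_2}$ and $k'\in\mathbb Z_+^{m_1}$ put $G(\Delta y,k')=B^{-1}(\Delta y-Ak')$ and $S_{\Delta y}=\{k'\in\mathbb Z_+^{m_1}: G(\Delta y,k')\in\mathbb Z_+^{m_2}\}$. Let $\lambda=(\lambda',\lambda''):[0,T]\times\mathbb Z_+^{n}\times\mathbb Z_+^{n_2}\to(0,\infty)^m$ be strictly positive, measurable and integrable in $t$, with $\lambda'$ its first $m_1$ and $\lambda''$ its last $m_2$ components; let $\mu$ be a probability measure on $\mathbb Z_+^n$. An $m$-variate Poisson random variable (resp. inhomogeneous Poisson process) with vector mean (resp. intensity) has independent components with the corresponding component means (intensities). For $(x_0,y_0)\in\mathbb Z_+^n$,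 $\rho(\cdot,x_0,y_0,y)$ denotes the p.m.f. on $\mathbb Z_+^{m_2}$ of an $m_2$-variate Poisson random variable with mean $\int_0^T\lambda''(t,(x_0,y_0),y)\,dt$. Lab process: on a probability space $(\Omega,\mathcal F,P_0)$ let $Z_0=(X_0,Y_0)$ take values in $\mathbb Z_+^{n_1}\times\mathbb Z_+^{n_2}$, let $R=(R',R'')$ ($R'$ with $m_1$, $R''$ with $m_2$ components) be a càdlàg $m$-variate counting process on $[0,T]$ with $R(0)=0$, and set $Z(t)=(X(t),Y(t))=Z_0+\nu R(t)$, so $Y(t)=Y_0+\nu''R(t)$. Let $O_p\in\mathcal F$ with $P_0(O_p)>0$. Under $P_0$: conditioned on $O_p$, $Z_0$ has law $\mu$; conditioned on $O_p\cap\{Z_0=z_0\}$, $R$ is an $m$-variate inhomogeneous Poisson process with intensity $t\mapsto\lambda(t,z_0,y)$. Let $O_y=\{Y(T)=y\}$, $O=O_p\cap O_y$, and assume $P_0(O)>0$. Filter variables: let $(U_{0,i},V_{0,i},K'_i)_{i\in\mathbb N}$ be random variables in $\mathbb Z_+^{n_1}\times\mathbb Z_+^{n_2}\times\mathbb Z_+^{m_1}$ such that, under $P_0$ conditioned on $O_p$, these triples are i.i.d. and independent of $(Z_0,R)$, $(U_{0,i},V_{0,i})$ has law $\mu$, and conditioned additionally on $(U_{0,i},V_{0,i})=(x_0,y_0)$, $K'_i$ is $m_1$-variate Poisson with mean $\int_0^T\lambda'(t,(x_0,y_0),y)\,dt$. Let $N=\min\{i\in\mathbb N: K'_i\in S_{y-V_{0,i}}\}$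 (finite $P_0$-a.s.), and define $K'=K'_N$, $U_0=U_{0,N}$, $V_0=V_{0,N}$, $\tilde Z_0=(U_0,V_0)$, $K''=G(y-V_0,K')$, $K=(K',K'')$, and $W=\rho(K'',U_0,V_0,y)$. *)

theory Defs
  imports "HOL-Probability.Probability" "Jordan_Normal_Form.Gauss_Jordan_Elimination"
begin

definition nnvecs :: "nat \<Rightarrow> int vec set" where
  "nnvecs k = {v. dim_vec v = k \<and> (\<forall>i<k. 0 \<le> v $ i)}"

definition vslice :: "'b vec \<Rightarrow> nat \<Rightarrow> nat \<Rightarrow> 'b vec" where
  "vslice v s l = vec l (\<lambda>i. v $ (s + i))"

definition mslice :: "'b mat \<Rightarrow> nat \<Rightarrow> nat \<Rightarrow> nat \<Rightarrow> nat \<Rightarrow> 'b mat" where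
  "mslice A r0 nr c0 nc = mat nr nc (\<lambda>(i, j). A $$ (r0 + i, c0 + j))"

definition cprob :: "'a measure \<Rightarrow> 'a set \<Rightarrow> 'a set \<Rightarrow> real" where
  "cprob M A C = measure M (A \<inter> C) / measure M C"

definition pois :: "real \<Rightarrow> nat \<Rightarrow> real" where
  "pois a k = a ^ k / fact k * exp (- a)"

definition mpois :: "nat \<Rightarrow> (nat \<Rightarrow> real) \<Rightarrow> int vec \<Rightarrow> real" where
  "mpois d a k = (if k \<in> nnvecs d then (\<Prod>i<d. pois (a i) (nat (k $ i))) else 0)"

definition counting_path :: "nat \<Rightarrow> real \<Rightarrow> (real \<Rightarrow> int vec) \<Rightarrow> bool" where
  "counting_path d T r \<longleftrightarrow> r 0 = 0\<^sub>v d \<and> (\<forall>t\<in>{0..T}. dim_vec (r t) = d) \<and>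
     (\<forall>i<d. mono_on {0..T} (\<lambda>t. r t $ i) \<and>
        (\<forall>t\<in>{0..<T}. \<exists>e>0. \<forall>s\<in>{t..t+e}. r s $ i = r t $ i) \<and>
        (\<forall>t\<in>{0<..T}. \<exists>e>0. \<forall>s\<in>{t-e<..<t}. r t $ i - r s $ i \<le> 1))"

text \<open>Under M conditioned on the event C, R is a d-variate inhomogeneous Poisson process on
  [0,T] with intensity l: R(0)=0 and for all 0 = t_0 <= t_1 <= ... <= t_k <= T the increments
  R(t_j) - R(t_(j-1)) are independent d-variate Poisson variables with means the integrals
  of l over [t_(j-1), t_j].\<close>
definition inhom_poisson ::
  "'a measure \<Rightarrow> 'a set \<Rightarrow> nat \<Rightarrow> real \<Rightarrow> (real \<Rightarrow> 'a \<Rightarrow> int vec) \<Rightarrow> (real \<Rightarrow> nat \<Rightarrow> real) \<Rightarrow> bool"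
  where
  "inhom_poisson M C d T R l \<longleftrightarrow>
     cprob M {\<omega>\<in>space M. R 0 \<omega> = 0\<^sub>v d} C = 1 \<and>
     (\<forall>ts ks. sorted ts \<and> set ts \<subseteq> {0..T} \<and> length ks = length ts \<longrightarrow>
        cprob M {\<omega>\<in>space M. \<forall>j<length ts. R (ts ! j) \<omega> - R ((0 # ts) ! j) \<omega> = ks ! j} C
        = (\<Prod>j<length ts. mpois d (\<lambda>i. LBINT t=(0 # ts) ! j..ts ! j. l t i) (ks ! j)))"

text \<open>The blocks of nu: nu'' = last n2 rows; nu'' = [A B].\<close>
definition nu2 :: "nat \<Rightarrow> nat \<Rightarrow> nat \<Rightarrow> int mat \<Rightarrow> int mat" where
  "nu2 n1 n2 m \<nu> = mslice \<nu> n1 n2 0 m"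

definition Amat :: "nat \<Rightarrow> nat \<Rightarrow> nat \<Rightarrow> int mat \<Rightarrow> int mat" where
  "Amat n1 n2 m1 \<nu> = mslice \<nu> n1 n2 0 m1"

definition Bmat :: "nat \<Rightarrow> nat \<Rightarrow> nat \<Rightarrow> nat \<Rightarrow> int mat \<Rightarrow> int mat" where
  "Bmat n1 n2 m1 m2 \<nu> = mslice \<nu> n1 n2 m1 m2"

definition Gfun :: "nat \<Rightarrow> nat \<Rightarrow> nat \<Rightarrow> nat \<Rightarrow> int mat \<Rightarrow> int vec \<Rightarrow> int vec \<Rightarrow> rat vec" where
  "Gfun n1 n2 m1 m2 \<nu> dy k =
     the (mat_inverse (map_mat rat_of_int (Bmat n1 n2 m1 m2 \<nu>)))
       *\<^sub>v map_vec rat_of_int (dy - Amat n1 n2 m1 \<nu> *\<^sub>v k)"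

definition Sset :: "nat \<Rightarrow> nat \<Rightarrow> nat \<Rightarrow> nat \<Rightarrow> int mat \<Rightarrow> int vec \<Rightarrow> int vec set" where
  "Sset n1 n2 m1 m2 \<nu> dy = {k \<in> nnvecs m1.
     dim_vec (Gfun n1 n2 m1 m2 \<nu> dy k) = m2 \<and>
     (\<forall>i<m2. \<exists>j::nat. Gfun n1 n2 m1 m2 \<nu> dy k $ i = of_nat j)}"

end

theory Submission
  imports Defs
begin
instance vec :: (countable) countable
proof (rule countable_classI[of "\<lambda>v. to_nat (list_of_vec v)"])
  fix x y :: "'a vec"
  assume "to_nat (list_of_vec x) = to_nat (list_of_vec y)"
  then have h: "list_of_vec x = list_of_vec y" by simp
  then have d: "dim_vec x = dim_vec y" by (metis length_list_of_vec)
  show "x = y"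
  proof (rule eq_vecI)
    fix i assume "i < dim_vec y"
    then show "x $ i = y $ i" using h d by (metis nth_list_of_vec)
  qed (use d in auto)
qed

lemma nnvecs_carrier: "v \<in> nnvecs k \<Longrightarrow> v \<in> carrier_vec k"
  unfolding nnvecs_def carrier_vec_def by simp

lemma vslice_append1: "u \<in> carrier_vec n1 \<Longrightarrow> vslice (u @\<^sub>v v) 0 n1 = u"
proof -
  assume u: "u \<in> carrier_vec n1"
  then have du: "dim_vec u = n1" by auto
  show ?thesis
    unfolding vslice_def
  proof (rule eq_vecI)
    fix i assume "i < dim_vec u"
    then show "vec n1 (\<lambda>i. (u @\<^sub>v v) $ (0 + i)) $ i = u $ i"
      using du by (simp add: index_append_vec)
  qed (simp add: du)
qed

lemma vslice_append2: "u \<in> carrier_vec n1 \<Longrightarrow> v \<in> carrier_vec n2 \<Longrightarrow> vslice (u @\<^sub>v v) n1 n2 = v"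
proof -
  assume u: "u \<in> carrier_vec n1" and v: "v \<in> carrier_vec n2"
  then have du: "dim_vec u = n1" and dv: "dim_vec v = n2" by auto
  show ?thesis
    unfolding vslice_def
  proof (rule eq_vecI)
    fix i assume "i < dim_vec v"
    then show "vec n2 (\<lambda>i. (u @\<^sub>v v) $ (n1 + i)) $ i = v $ i"
      using du dv by (simp add: index_append_vec)
  qed (simp add: dv)
qed

lemma vslice_split: "z \<in> carrier_vec (n1 + n2) \<Longrightarrow> vslice z 0 n1 @\<^sub>v vslice z n1 n2 = z"
proof -
  assume z: "z \<in> carrier_vec (n1 + n2)"
  then have dz: "dim_vec z = n1 + n2" by auto
  show ?thesis
  proof (rule eq_vecI)
    fix i assume i: "i < dim_vec z"
    show "(vslice z 0 n1 @\<^sub>v vslice z n1 n2) $ i = z $ i"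
    proof (cases "i < n1")
      case True then show ?thesis using i dz by (simp add: vslice_def index_append_vec)
    next
      case False
      then have "n1 + (i - n1) = i" by simp
      then show ?thesis using False i dz by (simp add: vslice_def index_append_vec)
    qed
  qed (simp add: dz vslice_def)
qed

lemma append_nnvecs: "u \<in> nnvecs n1 \<Longrightarrow> v \<in> nnvecs n2 \<Longrightarrow> u @\<^sub>v v \<in> nnvecs (n1 + n2)"
proof -
  assume u: "u \<in> nnvecs n1" and v: "v \<in> nnvecs n2"
  then have du: "dim_vec u = n1" and dv: "dim_vec v = n2"
    and nu: "\<forall>i<n1. 0 \<le> u $ i" and nv: "\<forall>i<n2. 0 \<le> v $ i" by (auto simp: nnvecs_def)
  have "\<forall>i<n1+n2. 0 \<le> (u @\<^sub>v v) $ i"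
  proof (intro allI impI)
    fix i assume "i < n1 + n2"
    then show "0 \<le> (u @\<^sub>v v) $ i" using du dv nu nv by (simp add: index_append_vec)
  qed
  then show ?thesis using du dv by (simp add: nnvecs_def)
qed

lemma vslice_nnvecs: "z \<in> nnvecs (n1 + n2) \<Longrightarrow> vslice z 0 n1 \<in> nnvecs n1 \<and> vslice z n1 n2 \<in> nnvecs n2"
proof -
  assume z: "z \<in> nnvecs (n1 + n2)"
  then have nz: "\<forall>i<n1+n2. 0 \<le> z $ i" by (simp add: nnvecs_def)
  show ?thesis unfolding nnvecs_def vslice_def using nz by simp
qed

definition vext :: "int vec \<Rightarrow> nat \<Rightarrow> int vec" where
  "vext v n = vec (Suc (dim_vec v)) (\<lambda>i. if i < dim_vec v then v $ i else int n)"

lemma vext_bij: "bij_betw (\<lambda>p. vext (fst p) (snd p)) (nnvecs m \<times> UNIV) (nnvecs (Suc m))"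
proof (rule bij_betwI[where g = "\<lambda>w. (vec m (\<lambda>i. w $ i), nat (w $ m))"])
  show "(\<lambda>p. vext (fst p) (snd p)) \<in> nnvecs m \<times> UNIV \<rightarrow> nnvecs (Suc m)"
  proof
    fix p assume p: "p \<in> nnvecs m \<times> (UNIV :: nat set)"
    obtain v n where pv: "p = (v, n)" by (cases p)
    have dv: "dim_vec v = m" and nv: "\<forall>i<m. 0 \<le> v $ i" using p pv by (auto simp: nnvecs_def)
    have "\<forall>i<Suc m. 0 \<le> vext v n $ i"
    proof (intro allI impI)
      fix i assume "i < Suc m" then show "0 \<le> vext v n $ i" using dv nv by (simp add: vext_def)
    qed
    then show "vext (fst p) (snd p) \<in> nnvecs (Suc m)" using pv dv by (simp add: nnvecs_def vext_def)
  qed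
  show "(\<lambda>w. (vec m (\<lambda>i. w $ i), nat (w $ m))) \<in> nnvecs (Suc m) \<rightarrow> nnvecs m \<times> UNIV"
  proof
    fix w assume "w \<in> nnvecs (Suc m)"
    then have "\<forall>i<Suc m. 0 \<le> w $ i" by (simp add: nnvecs_def)
    then show "(vec m (\<lambda>i. w $ i), nat (w $ m)) \<in> nnvecs m \<times> UNIV" by (simp add: nnvecs_def)
  qed
next
  fix p assume p: "p \<in> nnvecs m \<times> (UNIV :: nat set)"
  obtain v n where pv: "p = (v, n)" by (cases p)
  have dv: "dim_vec v = m" using p pv by (simp add: nnvecs_def)
  have "vec m (\<lambda>i. vext v n $ i) = v"
  proof (rule eq_vecI)
    fix i assume "i < dim_vec v" then show "vec m (\<lambda>i. vext v n $ i) $ i = v $ i"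
      using dv by (simp add: vext_def)
  qed (simp add: dv)
  moreover have "nat (vext v n $ m) = n" using dv by (simp add: vext_def)
  ultimately show "(vec m (\<lambda>i. vext (fst p) (snd p) $ i), nat (vext (fst p) (snd p) $ m)) = p"
    using pv by simp
next
  fix w assume w: "w \<in> nnvecs (Suc m)"
  then have dw: "dim_vec w = Suc m" and nn: "\<forall>i<Suc m. 0 \<le> w $ i" by (auto simp: nnvecs_def)
  have "vext (vec m (\<lambda>i. w $ i)) (nat (w $ m)) = w"
  proof (rule eq_vecI)
    fix i assume i: "i < dim_vec w"
    show "vext (vec m (\<lambda>i. w $ i)) (nat (w $ m)) $ i = w $ i"
    proof (cases "i < m")
      case True then show ?thesis using i dw by (simp add: vext_def)
    next
      case False then have im: "i = m" using i dw by simp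
      have "0 \<le> w $ m" using nn by simp
      then show ?thesis using im by (simp add: vext_def)
    qed
  qed (simp add: vext_def dw)
  then show "vext (fst (vec m (\<lambda>i. w $ i), nat (w $ m))) (snd (vec m (\<lambda>i. w $ i), nat (w $ m))) = w"
    by simp
qed

lemma append_vext: "k @\<^sub>v vext u n = vext (k @\<^sub>v u) n"
proof (rule eq_vecI)
  fix i assume i: "i < dim_vec (vext (k @\<^sub>v u) n)"
  show "(k @\<^sub>v vext u n) $ i = vext (k @\<^sub>v u) n $ i"
  proof (cases "i < dim_vec k")
    case True then show ?thesis using i by (simp add: vext_def index_append_vec)
  next
    case False then show ?thesis using i by (auto simp: vext_def index_append_vec)
  qed
qed (simp add: vext_def)

lemma mpois_vext: "v \<in> nnvecs d \<Longrightarrow> mpois (Suc d) a (vext v n) = mpois d a v * pois (a d) n"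
proof -
  assume v: "v \<in> nnvecs d"
  then have dv: "dim_vec v = d" and nv: "\<forall>i<d. 0 \<le> v $ i" by (auto simp: nnvecs_def)
  have "\<forall>i<Suc d. 0 \<le> vext v n $ i"
  proof (intro allI impI)
    fix i assume "i < Suc d" then show "0 \<le> vext v n $ i" using dv nv by (simp add: vext_def)
  qed
  then have e: "vext v n \<in> nnvecs (Suc d)" using dv by (simp add: vext_def nnvecs_def)
  have "mpois (Suc d) a (vext v n) = (\<Prod>i<Suc d. pois (a i) (nat (vext v n $ i)))"
    using e by (simp add: mpois_def)
  also have "\<dots> = (\<Prod>i<d. pois (a i) (nat (vext v n $ i))) * pois (a d) (nat (vext v n $ d))"
    by (rule prod.lessThan_Suc)
  also have "(\<Prod>i<d. pois (a i) (nat (vext v n $ i))) = (\<Prod>i<d. pois (a i) (nat (v $ i)))"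
    by (rule prod.cong) (auto simp: vext_def dv)
  also have "nat (vext v n $ d) = n" by (simp add: vext_def dv)
  finally show ?thesis using v by (simp add: mpois_def)
qed

lemma pois_nonneg: "r \<ge> 0 \<Longrightarrow> pois r k \<ge> 0"
  by (simp add: pois_def)

lemma mpois_nonneg: "(\<forall>i<d. a i \<ge> 0) \<Longrightarrow> mpois d a k \<ge> 0"
  by (auto simp: mpois_def pois_nonneg intro!: prod_nonneg)

lemma pois_sum: "r \<ge> 0 \<Longrightarrow> (\<integral>\<^sup>+n. ennreal (pois r n) \<partial>count_space UNIV) = 1"
proof (cases "r = 0")
  case True
  have "(\<lambda>n. ennreal (pois r n)) = indicator {0}"
    using True by (auto simp: pois_def fun_eq_iff split: split_indicator)
  then show ?thesis by simp
next
  case False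
  assume "r \<ge> 0"
  with False have r: "r > 0" by simp
  have "(\<lambda>n. ennreal (pois r n)) = (\<lambda>n. ennreal (pmf (poisson_pmf r) n))"
    using r by (simp add: pmf_poisson pois_def)
  then show ?thesis by (simp add: nn_integral_pmf_eq_1)
qed

lemma append_in_nnvecs_D: "k \<in> nnvecs m1 \<Longrightarrow> k @\<^sub>v w \<in> nnvecs (m1 + m) \<Longrightarrow> w \<in> nnvecs m"
proof -
  assume k: "k \<in> nnvecs m1" and kw: "k @\<^sub>v w \<in> nnvecs (m1 + m)"
  have dk: "dim_vec k = m1" using k by (simp add: nnvecs_def)
  have dw: "dim_vec w = m" using kw dk by (simp add: nnvecs_def)
  have "w = vslice (k @\<^sub>v w) m1 m"
    by (rule vslice_append2[symmetric]) (rule carrier_vecI, simp add: dk dw)+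
  then show ?thesis using vslice_nnvecs[OF kw] by simp
qed

lemma marg:
  assumes k: "k \<in> nnvecs m1" and a: "\<forall>i<m1+m2. a i \<ge> 0"
  shows "(\<integral>\<^sup>+w. ennreal (mpois (m1 + m2) a (k @\<^sub>v w)) \<partial>count_space UNIV) = ennreal (mpois m1 a k)"
  using a
proof (induction m2)
  case 0
  have "(\<lambda>w. ennreal (mpois (m1 + 0) a (k @\<^sub>v w))) = (\<lambda>w. ennreal (mpois m1 a k) * indicator {0\<^sub>v 0} w)"
  proof
    fix w :: "int vec"
    show "ennreal (mpois (m1 + 0) a (k @\<^sub>v w)) = ennreal (mpois m1 a k) * indicator {0\<^sub>v 0} w"
    proof (cases "w = 0\<^sub>v 0")
      case True
      have "k @\<^sub>v 0\<^sub>v 0 = k" by (rule eq_vecI) (simp_all add: index_append_vec)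
      then show ?thesis using True by simp
    next
      case False
      have "k @\<^sub>v w \<notin> nnvecs m1"
      proof
        assume "k @\<^sub>v w \<in> nnvecs m1"
        then have "w \<in> nnvecs 0" using append_in_nnvecs_D[OF k, of w 0] by simp
        then have "dim_vec w = 0" by (simp add: nnvecs_def)
        then have "w = 0\<^sub>v 0" by (intro eq_vecI) auto
        then show False using False by simp
      qed
      then show ?thesis using False by (simp add: mpois_def)
    qed
  qed
  then show ?case by simp
next
  case (Suc m2)
  have a2: "\<forall>i<m1+m2. a i \<ge> 0" using Suc.prems by simp
  have am: "a (m1 + m2) \<ge> 0" using Suc.prems by simp
  define g where "g u = ennreal (mpois (m1 + m2) a (k @\<^sub>v u))" for u
  define h where "h n = ennreal (pois (a (m1 + m2)) n)" for n
  have g0: "g u = g u * indicator (nnvecs m2) u" for u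
  proof (cases "u \<in> nnvecs m2")
    case False
    then have "k @\<^sub>v u \<notin> nnvecs (m1 + m2)" using append_in_nnvecs_D[OF k] by blast
    then show ?thesis by (simp add: g_def mpois_def)
  qed simp
  have "(\<integral>\<^sup>+w. ennreal (mpois (m1 + Suc m2) a (k @\<^sub>v w)) \<partial>count_space UNIV)
      = (\<integral>\<^sup>+w. ennreal (mpois (m1 + Suc m2) a (k @\<^sub>v w)) \<partial>count_space (nnvecs (Suc m2)))"
  proof -
    have "(\<integral>\<^sup>+w. ennreal (mpois (m1 + Suc m2) a (k @\<^sub>v w)) \<partial>count_space (nnvecs (Suc m2)))
       = (\<integral>\<^sup>+w. ennreal (mpois (m1 + Suc m2) a (k @\<^sub>v w)) * indicator (nnvecs (Suc m2)) w \<partial>count_space UNIV)"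
      by (simp add: nn_integral_count_space_indicator)
    also have "\<dots> = (\<integral>\<^sup>+w. ennreal (mpois (m1 + Suc m2) a (k @\<^sub>v w)) \<partial>count_space UNIV)"
    proof (rule nn_integral_cong)
      fix w :: "int vec"
      show "ennreal (mpois (m1 + Suc m2) a (k @\<^sub>v w)) * indicator (nnvecs (Suc m2)) w
          = ennreal (mpois (m1 + Suc m2) a (k @\<^sub>v w))"
      proof (cases "w \<in> nnvecs (Suc m2)")
        case False
        then have "k @\<^sub>v w \<notin> nnvecs (m1 + Suc m2)" using append_in_nnvecs_D[OF k] by blast
        then show ?thesis by (simp add: mpois_def)
      qed simp
    qed
    finally show ?thesis by simp
  qed
  also have "\<dots> = (\<integral>\<^sup>+p. ennreal (mpois (m1 + Suc m2) a (k @\<^sub>v vext (fst p) (snd p))) \<partial>count_space (nnvecs m2 \<times> UNIV))"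
    by (rule nn_integral_bij_count_space[OF vext_bij, symmetric])
  also have "\<dots> = (\<integral>\<^sup>+p. g (fst p) * h (snd p) \<partial>count_space (nnvecs m2 \<times> UNIV))"
  proof (rule nn_integral_cong)
    fix p assume "p \<in> space (count_space (nnvecs m2 \<times> (UNIV :: nat set)))"
    then have u: "fst p \<in> nnvecs m2" by auto
    have ku: "k @\<^sub>v fst p \<in> nnvecs (m1 + m2)" by (rule append_nnvecs[OF k u])
    have "mpois (m1 + Suc m2) a (k @\<^sub>v vext (fst p) (snd p)) = mpois (Suc (m1 + m2)) a (vext (k @\<^sub>v fst p) (snd p))"
      by (simp add: append_vext)
    also have "\<dots> = mpois (m1 + m2) a (k @\<^sub>v fst p) * pois (a (m1 + m2)) (snd p)"
      by (rule mpois_vext[OF ku])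
    finally show "ennreal (mpois (m1 + Suc m2) a (k @\<^sub>v vext (fst p) (snd p))) = g (fst p) * h (snd p)"
      using mpois_nonneg[OF a2] pois_nonneg[OF am] by (simp add: g_def h_def ennreal_mult)
  qed
  also have "\<dots> = (\<integral>\<^sup>+p. g (fst p) * indicator (nnvecs m2) (fst p) * h (snd p) \<partial>count_space UNIV)"
    by (simp add: nn_integral_count_space_indicator indicator_times mult.commute mult.left_commute)
  also have "\<dots> = (\<integral>\<^sup>+u. \<integral>\<^sup>+n. g u * indicator (nnvecs m2) u * h n \<partial>count_space UNIV \<partial>count_space UNIV)"
    by (rule nn_integral_fst_count_space[symmetric, where f = "\<lambda>p. g (fst p) * indicator (nnvecs m2) (fst p) * h (snd p)", simplified])
  also have "\<dots> = (\<integral>\<^sup>+u. g u * indicator (nnvecs m2) u * (\<integral>\<^sup>+n. h n \<partial>count_space UNIV) \<partial>count_space UNIV)"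
    by (simp add: nn_integral_cmult)
  also have "\<dots> = (\<integral>\<^sup>+u. g u \<partial>count_space UNIV)"
    using pois_sum[OF am] g0 by (simp add: h_def)
  also have "\<dots> = ennreal (mpois m1 a k)"
    using Suc.IH[OF a2] by (simp add: g_def)
  finally show ?case .
qed

lemma pred_count: "X \<in> M \<rightarrow>\<^sub>M count_space UNIV \<Longrightarrow> {\<omega>\<in>space M. Q (X \<omega>)} \<in> sets M"
proof -
  assume X: "X \<in> M \<rightarrow>\<^sub>M count_space UNIV"
  have "X -` {x. Q x} \<inter> space M \<in> sets M" by (rule measurable_sets[OF X]) simp
  moreover have "X -` {x. Q x} \<inter> space M = {\<omega>\<in>space M. Q (X \<omega>)}" by auto
  ultimately show ?thesis by (simp add: zero_ereal_def)
qed

lemma pair_count: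
  fixes X :: "'a \<Rightarrow> 'b :: countable" and Y :: "'a \<Rightarrow> 'c :: countable"
  assumes "X \<in> M \<rightarrow>\<^sub>M count_space UNIV" "Y \<in> M \<rightarrow>\<^sub>M count_space UNIV"
  shows "(\<lambda>\<omega>. (X \<omega>, Y \<omega>)) \<in> M \<rightarrow>\<^sub>M count_space UNIV"
proof -
  have "(\<lambda>\<omega>. (X \<omega>, Y \<omega>)) \<in> M \<rightarrow>\<^sub>M count_space UNIV \<Otimes>\<^sub>M count_space UNIV"
    using assms by (rule measurable_Pair)
  also have "count_space (UNIV :: 'b set) \<Otimes>\<^sub>M count_space (UNIV :: 'c set) = count_space UNIV"
    by (simp add: pair_measure_countable)
  finally show ?thesis .
qed

lemma law_eq:
  fixes X Y :: "'a \<Rightarrow> 'b :: countable"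
  assumes X: "X \<in> N \<rightarrow>\<^sub>M count_space UNIV" and Y: "Y \<in> N \<rightarrow>\<^sub>M count_space UNIV"
    and pt: "\<And>c. emeasure N {\<omega>\<in>space N. X \<omega> = c} = emeasure N {\<omega>\<in>space N. Y \<omega> = c}"
  shows "emeasure N {\<omega>\<in>space N. X \<omega> \<in> A} = emeasure N {\<omega>\<in>space N. Y \<omega> \<in> A}"
proof -
  have eq: "distr N (count_space UNIV) X = distr N (count_space UNIV) Y"
  proof (rule measure_eqI_countable[where A = UNIV])
    fix a :: 'b
    have "emeasure (distr N (count_space UNIV) X) {a} = emeasure N (X -` {a} \<inter> space N)"
      by (rule emeasure_distr[OF X]) simp
    also have "X -` {a} \<inter> space N = {\<omega>\<in>space N. X \<omega> = a}" by auto
    also have "emeasure N \<dots> = emeasure N {\<omega>\<in>space N. Y \<omega> = a}" by (rule pt)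
    also have "{\<omega>\<in>space N. Y \<omega> = a} = Y -` {a} \<inter> space N" by auto
    also have "emeasure N \<dots> = emeasure (distr N (count_space UNIV) Y) {a}"
      by (rule emeasure_distr[OF Y, symmetric]) simp
    finally show "emeasure (distr N (count_space UNIV) X) {a} = emeasure (distr N (count_space UNIV) Y) {a}" .
  qed auto
  have sx: "X -` A \<inter> space N = {\<omega>\<in>space N. X \<omega> \<in> A}" by auto
  have sy: "Y -` A \<inter> space N = {\<omega>\<in>space N. Y \<omega> \<in> A}" by auto
  have "emeasure N {\<omega>\<in>space N. X \<omega> \<in> A} = emeasure (distr N (count_space UNIV) X) A"
    using emeasure_distr[OF X, of A] sx by simp
  also have "\<dots> = emeasure (distr N (count_space UNIV) Y) A" by (simp add: eq)
  also have "\<dots> = emeasure N {\<omega>\<in>space N. Y \<omega> \<in> A}"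
    using emeasure_distr[OF Y, of A] sy by simp
  finally show ?thesis .
qed

lemma geom_le_zero:
  fixes x q c :: real
  assumes le: "\<And>n. x \<le> q ^ n * c" and q: "0 \<le> q" "q < 1"
  shows "x \<le> 0"
proof -
  have "(\<lambda>n. q ^ n * c) \<longlonglongrightarrow> 0 * c"
    by (intro tendsto_mult LIMSEQ_power_zero tendsto_const) (use q in simp)
  then have "(\<lambda>n. q ^ n * c) \<longlonglongrightarrow> 0" by simp
  then show ?thesis using le by (intro LIMSEQ_le_const) auto
qed

lemma lbint_nonneg:
  fixes f :: "real \<Rightarrow> real"
  assumes T: "T \<ge> 0" and pos: "\<And>t. t \<in> {0..T} \<Longrightarrow> f t > 0"
  shows "(LBINT t=0..T. f t) \<ge> 0"
proof -
  have "(LBINT t=0..T. f t) = set_lebesgue_integral lborel (einterval 0 T) f"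
    using T by (simp add: interval_lebesgue_integral_def)
  also have "\<dots> \<ge> 0"
    unfolding set_lebesgue_integral_def
  proof (rule integral_nonneg_AE, rule AE_I2)
    fix t
    show "0 \<le> indicator (einterval 0 T) t *\<^sub>R f t"
    proof (cases "t \<in> einterval 0 T")
      case True then have "t \<in> {0..T}" by (auto simp: einterval_iff)
      then show ?thesis using pos[of t] True by simp
    qed simp
  qed
  finally show ?thesis .
qed

lemma path_facts:
  assumes "counting_path d T r" "T \<ge> 0"
  shows "r 0 = 0\<^sub>v d" "r T \<in> nnvecs d"
proof -
  show r0: "r 0 = 0\<^sub>v d" using assms(1) by (simp add: counting_path_def)
  have dT: "dim_vec (r T) = d" using assms by (simp add: counting_path_def)
  have "\<forall>i<d. 0 \<le> r T $ i"
  proof (intro allI impI)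
    fix i assume i: "i < d"
    then have "mono_on {0..T} (\<lambda>t. r t $ i)" using assms(1) by (simp add: counting_path_def)
    then have "r 0 $ i \<le> r T $ i" by (rule mono_onD) (use assms(2) in auto)
    then show "0 \<le> r T $ i" using r0 i by simp
  qed
  then show "r T \<in> nnvecs d" using dT by (simp add: nnvecs_def)
qed

lemma inhom_single:
  assumes ip: "inhom_poisson M C d T R l" and T: "T \<ge> 0"
    and R0: "\<And>\<omega>. \<omega> \<in> space M \<Longrightarrow> R 0 \<omega> = 0\<^sub>v d"
    and RT: "\<And>\<omega>. \<omega> \<in> space M \<Longrightarrow> R T \<omega> \<in> carrier_vec d"
  shows "cprob M {\<omega>\<in>space M. R T \<omega> = K} C = mpois d (\<lambda>i. LBINT t=0..T. l t i) K"
proof -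
  have "cprob M {\<omega>\<in>space M. \<forall>j<length [T]. R ([T] ! j) \<omega> - R ((0 # [T]) ! j) \<omega> = [K] ! j} C
        = (\<Prod>j<length [T]. mpois d (\<lambda>i. LBINT t=(0 # [T]) ! j..[T] ! j. l t i) ([K] ! j))"
    using ip T unfolding inhom_poisson_def by (intro conjunct2[OF ip[unfolded inhom_poisson_def], rule_format]) auto
  moreover have "{\<omega>\<in>space M. \<forall>j<length [T]. R ([T] ! j) \<omega> - R ((0 # [T]) ! j) \<omega> = [K] ! j}
      = {\<omega>\<in>space M. R T \<omega> = K}"
  proof -
    have "\<And>\<omega>. \<omega> \<in> space M \<Longrightarrow> R T \<omega> - R 0 \<omega> = R T \<omega>"
      using R0 RT by (simp add: minus_zero_vec)
    then show ?thesis by auto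
  qed
  ultimately show ?thesis by (simp add: zero_ereal_def)
qed

lemma inv_some:
  assumes inv: "invertible_mat (A :: 'a :: field mat)" and A: "A \<in> carrier_mat n n"
  shows "\<exists>Bi. mat_inverse A = Some Bi \<and> Bi * A = 1\<^sub>m n \<and> Bi \<in> carrier_mat n n"
proof -
  obtain B where AB: "A * B = 1\<^sub>m (dim_row A)" and BA: "B * A = 1\<^sub>m (dim_row B)"
    using inv unfolding invertible_mat_def inverts_mat_def by blast
  have dA: "dim_row A = n" "dim_col A = n" using A by auto
  have "dim_col (A * B) = dim_col B" by simp
  then have cB: "dim_col B = n" using AB dA by (metis index_one_mat(3))
  have "dim_row (B * A) = dim_row B" by simp
  have "dim_col (B * A) = n" using dA by simp
  then have rB: "dim_row B = n" using BA by (metis index_one_mat(3))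
  have Bc: "B \<in> carrier_mat n n" using cB rB by auto
  have "A \<in> Units (ring_mat TYPE('a) n ())"
    unfolding Units_def using A Bc AB BA dA rB by (auto simp: ring_mat_def)
  then have "mat_inverse A \<noteq> None"
  proof (intro notI)
    assume "mat_inverse A = None"
    from mat_inverse(1)[OF A this, of "()"] show False using \<open>A \<in> Units (ring_mat TYPE('a) n ())\<close> by simp
  qed
  then obtain Bi where "mat_inverse A = Some Bi" by blast
  then show ?thesis using mat_inverse(2)[OF A] by blast
qed

lemma add_minus_cancel_vec: "a \<in> carrier_vec n \<Longrightarrow> b \<in> carrier_vec n \<Longrightarrow> a + b - a = (b :: 'a :: ab_group_add vec)"
proof -
  assume a: "a \<in> carrier_vec n" and b: "b \<in> carrier_vec n"
  then have da: "dim_vec a = n" and db: "dim_vec b = n" by auto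
  show ?thesis
  proof (rule eq_vecI)
    fix i assume "i < dim_vec b" then show "(a + b - a) $ i = b $ i" using da db by simp
  qed (simp add: da db)
qed

lemma block_mult:
  assumes nu: "\<nu> \<in> carrier_mat (n1 + n2) (m1 + m2)" and r: "r \<in> carrier_vec (m1 + m2)"
  shows "nu2 n1 n2 (m1 + m2) \<nu> *\<^sub>v r = Amat n1 n2 m1 \<nu> *\<^sub>v vslice r 0 m1 + Bmat n1 n2 m1 m2 \<nu> *\<^sub>v vslice r m1 m2"
proof (rule eq_vecI)
  have dr: "dim_vec r = m1 + m2" using r by auto
  fix i assume i: "i < dim_vec (Amat n1 n2 m1 \<nu> *\<^sub>v vslice r 0 m1 + Bmat n1 n2 m1 m2 \<nu> *\<^sub>v vslice r m1 m2)"
  then have i2: "i < n2" by (simp add: Bmat_def mslice_def)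
  let ?f = "\<lambda>j. \<nu> $$ (n1 + i, j) * r $ j"
  have lhs: "(nu2 n1 n2 (m1 + m2) \<nu> *\<^sub>v r) $ i = (\<Sum>j\<in>{0..<m1+m2}. ?f j)"
    using i2 dr by (simp add: nu2_def mslice_def scalar_prod_def row_def)
  have a: "(Amat n1 n2 m1 \<nu> *\<^sub>v vslice r 0 m1) $ i = (\<Sum>j\<in>{0..<m1}. ?f j)"
    using i2 dr by (simp add: Amat_def mslice_def scalar_prod_def row_def vslice_def)
  have b: "(Bmat n1 n2 m1 m2 \<nu> *\<^sub>v vslice r m1 m2) $ i = (\<Sum>j\<in>{0..<m2}. ?f (m1 + j))"
    using i2 dr by (simp add: Bmat_def mslice_def scalar_prod_def row_def vslice_def)
  have split: "(\<Sum>j\<in>{0..<m1+m2}. ?f j) = (\<Sum>j\<in>{0..<m1}. ?f j) + (\<Sum>j\<in>{0..<m2}. ?f (m1 + j))"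
  proof -
    have "{0..<m1+m2} = {0..<m1} \<union> {m1..<m1+m2}" by auto
    then have "(\<Sum>j\<in>{0..<m1+m2}. ?f j) = (\<Sum>j\<in>{0..<m1}. ?f j) + (\<Sum>j\<in>{m1..<m1+m2}. ?f j)"
      by (simp add: sum.union_disjoint)
    also have "(\<Sum>j\<in>{m1..<m1+m2}. ?f j) = (\<Sum>j\<in>{0..<m2}. ?f (m1 + j))"
    proof -
      have "{m1..<m1+m2} = (\<lambda>j. m1 + j) ` {0..<m2}" by (auto simp: image_iff intro!: exI[of _ "x - m1" for x])
      then show ?thesis by (simp only:) (subst sum.reindex, auto simp: inj_on_def)
    qed
    finally show ?thesis .
  qed
  show "(nu2 n1 n2 (m1 + m2) \<nu> *\<^sub>v r) $ i = (Amat n1 n2 m1 \<nu> *\<^sub>v vslice r 0 m1 + Bmat n1 n2 m1 m2 \<nu> *\<^sub>v vslice r m1 m2) $ i"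
    using lhs a b split i by simp
qed (simp add: nu2_def Amat_def Bmat_def mslice_def)

lemma S_mem:
  assumes dims: "n2 = m2" and B_inv: "invertible_mat (map_mat rat_of_int (Bmat n1 n2 m1 m2 \<nu>))"
    and nu: "\<nu> \<in> carrier_mat (n1 + n2) (m1 + m2)" and r: "r \<in> nnvecs (m1 + m2)"
  shows "vslice r 0 m1 \<in> Sset n1 n2 m1 m2 \<nu> (nu2 n1 n2 (m1 + m2) \<nu> *\<^sub>v r)"
proof -
  let ?A = "Amat n1 n2 m1 \<nu>" and ?B = "Bmat n1 n2 m1 m2 \<nu>"
  let ?r1 = "vslice r 0 m1" and ?r2 = "vslice r m1 m2"
  have rc: "r \<in> carrier_vec (m1 + m2)" using r by (rule nnvecs_carrier)
  have r12: "?r1 \<in> nnvecs m1" "?r2 \<in> nnvecs m2" using vslice_nnvecs[OF r] by auto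
  have r1c: "?r1 \<in> carrier_vec m1" and r2c: "?r2 \<in> carrier_vec m2" using r12 by (auto intro: nnvecs_carrier)
  have Ac: "?A \<in> carrier_mat n2 m1" by (simp add: Amat_def mslice_def)
  have Bc: "?B \<in> carrier_mat m2 m2" using dims by (simp add: Bmat_def mslice_def)
  have Bqc: "map_mat rat_of_int ?B \<in> carrier_mat m2 m2" using Bc by simp
  obtain Bi where Bi: "mat_inverse (map_mat rat_of_int ?B) = Some Bi" "Bi * map_mat rat_of_int ?B = 1\<^sub>m m2"
    "Bi \<in> carrier_mat m2 m2"
    using inv_some[OF B_inv Bqc] by blast
  have "nu2 n1 n2 (m1 + m2) \<nu> *\<^sub>v r - ?A *\<^sub>v ?r1 = ?B *\<^sub>v ?r2"
  proof -
    have e: "nu2 n1 n2 (m1 + m2) \<nu> *\<^sub>v r = ?A *\<^sub>v ?r1 + ?B *\<^sub>v ?r2" by (rule block_mult[OF nu rc])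
    have c1: "?A *\<^sub>v ?r1 \<in> carrier_vec n2" using Ac r1c by simp
    have c2: "?B *\<^sub>v ?r2 \<in> carrier_vec n2" using Bc dims r2c by simp
    show ?thesis unfolding e by (rule add_minus_cancel_vec[OF c1 c2])
  qed
  then have G: "Gfun n1 n2 m1 m2 \<nu> (nu2 n1 n2 (m1 + m2) \<nu> *\<^sub>v r) ?r1 = Bi *\<^sub>v map_vec rat_of_int (?B *\<^sub>v ?r2)"
    using Bi(1) by (simp add: Gfun_def)
  also have "\<dots> = Bi *\<^sub>v (map_mat rat_of_int ?B *\<^sub>v map_vec rat_of_int ?r2)"
    by (rule arg_cong[where f = "\<lambda>x. Bi *\<^sub>v x"], rule of_int_hom.mult_mat_vec_hom[OF Bc r2c])
  also have "\<dots> = map_vec rat_of_int ?r2"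
    using assoc_mult_mat_vec[OF Bi(3) Bqc, of "map_vec rat_of_int ?r2"] r2c Bi(2) by simp
  finally have G2: "Gfun n1 n2 m1 m2 \<nu> (nu2 n1 n2 (m1 + m2) \<nu> *\<^sub>v r) ?r1 = map_vec rat_of_int ?r2" .
  have nn2: "\<forall>i<m2. 0 \<le> ?r2 $ i" "dim_vec ?r2 = m2" using r12 by (auto simp: nnvecs_def)
  have "\<forall>i<m2. \<exists>j::nat. map_vec rat_of_int ?r2 $ i = of_nat j"
  proof (intro allI impI)
    fix i assume "i < m2"
    then have "map_vec rat_of_int ?r2 $ i = of_nat (nat (?r2 $ i))" using nn2 by simp
    then show "\<exists>j::nat. map_vec rat_of_int ?r2 $ i = of_nat j" by blast
  qed
  then show ?thesis using r12 G2 nn2 by (simp add: Sset_def)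
qed
theorem proposition1:
  fixes n1 n2 m1 m2 :: nat and T :: real and y :: "int vec" and \<nu> :: "int mat"
    and lam :: "real \<Rightarrow> int vec \<Rightarrow> int vec \<Rightarrow> nat \<Rightarrow> real"
    and \<mu> :: "int vec pmf"
    and M :: "'a measure" and Z0 :: "'a \<Rightarrow> int vec" and R :: "real \<Rightarrow> 'a \<Rightarrow> int vec"
    and Op :: "'a set"
    and U0 V0 Kp :: "nat \<Rightarrow> 'a \<Rightarrow> int vec"
    and z0 k' :: "int vec"
  assumes dims: "n2 = m2"
    and T_pos: "T > 0"
    and y_in: "y \<in> nnvecs n2"
    and nu_dim: "\<nu> \<in> carrier_mat (n1 + n2) (m1 + m2)"
    and B_inv: "invertible_mat (map_mat rat_of_int (Bmat n1 n2 m1 m2 \<nu>))"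
    and lam_pos: "\<And>t z yy i. t \<in> {0..T} \<Longrightarrow> z \<in> nnvecs (n1 + n2) \<Longrightarrow> yy \<in> nnvecs n2 \<Longrightarrow>
                    i < m1 + m2 \<Longrightarrow> lam t z yy i > 0"
    and lam_meas: "\<And>z yy i. z \<in> nnvecs (n1 + n2) \<Longrightarrow> yy \<in> nnvecs n2 \<Longrightarrow> i < m1 + m2 \<Longrightarrow>
                    (\<lambda>t. lam t z yy i) \<in> borel_measurable (restrict_space lborel {0..T})"
    and lam_int: "\<And>z yy i. z \<in> nnvecs (n1 + n2) \<Longrightarrow> yy \<in> nnvecs n2 \<Longrightarrow> i < m1 + m2 \<Longrightarrow>
                    set_integrable lborel {0..T} (\<lambda>t. lam t z yy i)"
    and mu_supp: "set_pmf \<mu> \<subseteq> nnvecs (n1 + n2)"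
    and M_prob: "prob_space M"
    and Op_ev: "Op \<in> sets M"
    and Op_pos: "measure M Op > 0"
    and Z0_meas: "Z0 \<in> measurable M (count_space UNIV)"
    and Z0_vals: "\<And>\<omega>. \<omega> \<in> space M \<Longrightarrow> Z0 \<omega> \<in> nnvecs (n1 + n2)"
    and R_meas: "\<And>t. t \<in> {0..T} \<Longrightarrow> R t \<in> measurable M (count_space UNIV)"
    and R_paths: "\<And>\<omega>. \<omega> \<in> space M \<Longrightarrow> counting_path (m1 + m2) T (\<lambda>t. R t \<omega>)"
    and Z0_law: "\<And>z. cprob M {\<omega>\<in>space M. Z0 \<omega> = z} Op = pmf \<mu> z"
    and R_law: "\<And>z. measure M (Op \<inter> {\<omega>\<in>space M. Z0 \<omega> = z}) > 0 \<Longrightarrow>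
                  inhom_poisson M (Op \<inter> {\<omega>\<in>space M. Z0 \<omega> = z}) (m1 + m2) T R
                    (\<lambda>t i. lam t z y i)"
    and O_pos: "measure M (Op \<inter> {\<omega>\<in>space M.
                   vslice (Z0 \<omega>) n1 n2 + nu2 n1 n2 (m1 + m2) \<nu> *\<^sub>v R T \<omega> = y}) > 0"
    and filt_meas: "\<And>i. U0 i \<in> measurable M (count_space UNIV) \<and>
                         V0 i \<in> measurable M (count_space UNIV) \<and>
                         Kp i \<in> measurable M (count_space UNIV)"
    and filt_vals: "\<And>i \<omega>. \<omega> \<in> space M \<Longrightarrow>
                      U0 i \<omega> \<in> nnvecs n1 \<and> V0 i \<omega> \<in> nnvecs n2 \<and> Kp i \<omega> \<in> nnvecs m1"
    and filt_indep: "prob_space.indep_sets (uniform_measure M Op)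
                (\<lambda>j. case j of
                   Some i \<Rightarrow> sets (vimage_algebra (space M) (\<lambda>\<omega>. (U0 i \<omega>, V0 i \<omega>, Kp i \<omega>))
                                    (count_space UNIV))
                 | None \<Rightarrow> sets (vimage_algebra (space M) (\<lambda>\<omega>. (Z0 \<omega>, restrict (\<lambda>t. R t \<omega>) {0..T}))
                                    (count_space UNIV \<Otimes>\<^sub>M (\<Pi>\<^sub>M t\<in>{0..T}. count_space UNIV))))
                UNIV"
    and UV_law: "\<And>i x v. x \<in> nnvecs n1 \<Longrightarrow> v \<in> nnvecs n2 \<Longrightarrow>
                   cprob M {\<omega>\<in>space M. U0 i \<omega> = x \<and> V0 i \<omega> = v} Op = pmf \<mu> (x @\<^sub>v v)"
    and K_law: "\<And>i x v k. x \<in> nnvecs n1 \<Longrightarrow> v \<in> nnvecs n2 \<Longrightarrow>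
                   measure M (Op \<inter> {\<omega>\<in>space M. U0 i \<omega> = x \<and> V0 i \<omega> = v}) > 0 \<Longrightarrow>
                   cprob M {\<omega>\<in>space M. Kp i \<omega> = k} (Op \<inter> {\<omega>\<in>space M. U0 i \<omega> = x \<and> V0 i \<omega> = v})
                   = mpois m1 (\<lambda>j. LBINT t=0..T. lam t (x @\<^sub>v v) y j) k"
    and z0_in: "z0 \<in> nnvecs (n1 + n2)"
    and k'_in: "k' \<in> nnvecs m1"
  shows "cprob M
           {\<omega>\<in>space M.
              (let N = (LEAST i. Kp i \<omega> \<in> Sset n1 n2 m1 m2 \<nu> (y - V0 i \<omega>))
               in U0 N \<omega> @\<^sub>v V0 N \<omega> = z0 \<and> Kp N \<omega> = k')}
           (Op \<inter> {\<omega>\<in>space M. vslice (Z0 \<omega>) n1 n2 + nu2 n1 n2 (m1 + m2) \<nu> *\<^sub>v R T \<omega> = y})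
         = indicator (Sset n1 n2 m1 m2 \<nu> (y - vslice z0 n1 n2)) k'
           * cprob M {\<omega>\<in>space M. Z0 \<omega> = z0 \<and> vslice (R T \<omega>) 0 m1 = k'} Op
           / cprob M {\<omega>\<in>space M. vslice (R T \<omega>) 0 m1 \<in> Sset n1 n2 m1 m2 \<nu> (y - vslice (Z0 \<omega>) n1 n2)} Op"
proof -
  interpret M: prob_space M by (rule M_prob)
  define c where "c = measure M Op"
  have c_pos: "c > 0" using Op_pos by (simp add: c_def)
  have eOp: "emeasure M Op \<noteq> 0" "emeasure M Op \<noteq> \<infinity>"
    using Op_pos M.emeasure_eq_measure[of Op] by auto
  define P where "P = uniform_measure M Op"
  interpret P: prob_space P unfolding P_def by (rule prob_space_uniform_measure[OF eOp])
  have sP: "sets P = sets M" "space P = space M" by (simp_all add: P_def)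
  have Pr: "\<And>A. A \<in> sets M \<Longrightarrow> P.prob A = measure M (Op \<inter> A) / c"
    unfolding P_def c_def by (rule measure_uniform_measure[OF eOp])
  have T0: "T \<ge> 0" using T_pos by simp
  have Wm: "\<And>i. (\<lambda>\<omega>. (U0 i \<omega>, V0 i \<omega>, Kp i \<omega>)) \<in> M \<rightarrow>\<^sub>M count_space UNIV"
    using filt_meas by (intro pair_count) auto
  have RTm: "R T \<in> M \<rightarrow>\<^sub>M count_space UNIV" using R_meas T0 by simp
  have ZRm: "(\<lambda>\<omega>. (Z0 \<omega>, R T \<omega>)) \<in> M \<rightarrow>\<^sub>M count_space UNIV" by (intro pair_count Z0_meas RTm)
  have RTnn: "\<And>\<omega>. \<omega> \<in> space M \<Longrightarrow> R T \<omega> \<in> nnvecs (m1 + m2)"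
    using path_facts(2)[OF R_paths T0] by simp
  have R0: "\<And>\<omega>. \<omega> \<in> space M \<Longrightarrow> R 0 \<omega> = 0\<^sub>v (m1 + m2)"
    using path_facts(1)[OF R_paths T0] by simp
  have Wev: "\<And>i Q. {\<omega>\<in>space M. Q (U0 i \<omega>) (V0 i \<omega>) (Kp i \<omega>)} \<in> sets M"
  proof -
    fix i Q
    show "{\<omega>\<in>space M. Q (U0 i \<omega>) (V0 i \<omega>) (Kp i \<omega>)} \<in> sets M"
      using pred_count[OF Wm[of i], of "\<lambda>t. Q (fst t) (fst (snd t)) (snd (snd t))"] by simp
  qed
  have ZRev: "\<And>Q. {\<omega>\<in>space M. Q (Z0 \<omega>) (R T \<omega>)} \<in> sets M"
  proof -
    fix Q
    show "{\<omega>\<in>space M. Q (Z0 \<omega>) (R T \<omega>)} \<in> sets M"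
      using pred_count[OF ZRm, of "\<lambda>t. Q (fst t) (snd t)"] by simp
  qed
  define a where "a z = (\<lambda>j. LBINT t=0..T. lam t z y j)" for z
  have a_nn: "\<And>z. z \<in> nnvecs (n1 + n2) \<Longrightarrow> \<forall>i<m1+m2. a z i \<ge> 0"
    unfolding a_def using lam_pos y_in T0 by (auto intro!: lbint_nonneg)
  have Ylaw: "\<And>z k. P.prob {\<omega>\<in>space M. Z0 \<omega> = z \<and> vslice (R T \<omega>) 0 m1 = k} = pmf \<mu> z * mpois m1 (a z) k"
  proof -
    fix z k
    define Cz where "Cz = Op \<inter> {\<omega>\<in>space M. Z0 \<omega> = z}"
    have Cz_sets: "Cz \<in> sets M" unfolding Cz_def using Op_ev ZRev[of "\<lambda>a b. a = z"] by auto
    have mCz: "measure M Cz = c * pmf \<mu> z"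
    proof -
      have "measure M ({\<omega>\<in>space M. Z0 \<omega> = z} \<inter> Op) / c = pmf \<mu> z"
        using Z0_law[of z] by (simp add: cprob_def c_def)
      then show ?thesis using c_pos by (simp add: Cz_def Int_commute field_simps)
    qed
    define Hs where "Hs = {\<omega>\<in>space M. Z0 \<omega> = z \<and> vslice (R T \<omega>) 0 m1 = k}"
    have Hs_sets: "Hs \<in> sets M" unfolding Hs_def using ZRev[of "\<lambda>a b. a = z \<and> vslice b 0 m1 = k"] by simp
    have OHs: "Op \<inter> Hs = {\<omega>\<in>space M. vslice (R T \<omega>) 0 m1 = k} \<inter> Cz" by (auto simp: Hs_def Cz_def)
    have "measure M (Op \<inter> Hs) = c * (pmf \<mu> z * mpois m1 (a z) k)"
    proof (cases "measure M Cz = 0")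
      case True
      have "measure M (Op \<inter> Hs) \<le> measure M Cz"
        unfolding OHs by (rule M.finite_measure_mono) (auto simp: Cz_sets)
      then have "measure M (Op \<inter> Hs) = 0" using True by (simp add: measure_nonneg antisym)
      moreover have "pmf \<mu> z = 0" using True mCz c_pos by simp
      ultimately show ?thesis by simp
    next
      case False
      then have Cpos: "measure M Cz > 0" by (simp add: zero_less_measure_iff)
      have "pmf \<mu> z \<noteq> 0" using False mCz by simp
      then have zin: "z \<in> nnvecs (n1 + n2)" using mu_supp by (auto simp: set_pmf_iff)
      have ip: "inhom_poisson M Cz (m1 + m2) T R (\<lambda>t i. lam t z y i)"
        using R_law[of z] Cpos by (simp add: Cz_def)
      have RK: "\<And>K. measure M ({\<omega>\<in>space M. R T \<omega> = K} \<inter> Cz) = mpois (m1 + m2) (a z) K * measure M Cz"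
      proof -
        fix K
        have "cprob M {\<omega>\<in>space M. R T \<omega> = K} Cz = mpois (m1 + m2) (a z) K"
          unfolding a_def
          by (rule inhom_single[OF ip T0]) (use R0 RTnn nnvecs_carrier in auto)
        then show "measure M ({\<omega>\<in>space M. R T \<omega> = K} \<inter> Cz) = mpois (m1 + m2) (a z) K * measure M Cz"
          using Cpos by (simp add: cprob_def field_simps)
      qed
      show ?thesis
      proof (cases "k \<in> nnvecs m1")
        case False
        have "{\<omega>\<in>space M. vslice (R T \<omega>) 0 m1 = k} = {}"
          using False vslice_nnvecs[OF RTnn] by blast
        then have "Op \<inter> Hs = {}" unfolding OHs by blast
        then show ?thesis using False by (simp add: mpois_def)
      next
        case True
        have kc: "k \<in> carrier_vec m1" using True by (rule nnvecs_carrier)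
        have un: "{\<omega>\<in>space M. vslice (R T \<omega>) 0 m1 = k} \<inter> Cz = (\<Union>w\<in>UNIV. {\<omega>\<in>space M. R T \<omega> = k @\<^sub>v w} \<inter> Cz)"
        proof (intro equalityI subsetI)
          fix \<omega> assume "\<omega> \<in> {\<omega>\<in>space M. vslice (R T \<omega>) 0 m1 = k} \<inter> Cz"
          then have om: "\<omega> \<in> space M" "vslice (R T \<omega>) 0 m1 = k" "\<omega> \<in> Cz" by auto
          have "R T \<omega> = vslice (R T \<omega>) 0 m1 @\<^sub>v vslice (R T \<omega>) m1 m2"
            using vslice_split[OF nnvecs_carrier[OF RTnn[OF om(1)]]] by simp
          then show "\<omega> \<in> (\<Union>w\<in>UNIV. {\<omega>\<in>space M. R T \<omega> = k @\<^sub>v w} \<inter> Cz)" using om by auto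
        next
          fix \<omega> assume "\<omega> \<in> (\<Union>w\<in>UNIV. {\<omega>\<in>space M. R T \<omega> = k @\<^sub>v w} \<inter> Cz)"
          then obtain w where om: "\<omega> \<in> space M" "R T \<omega> = k @\<^sub>v w" "\<omega> \<in> Cz" by auto
          then show "\<omega> \<in> {\<omega>\<in>space M. vslice (R T \<omega>) 0 m1 = k} \<inter> Cz"
            using vslice_append1[OF kc] by simp
        qed
        have disj: "disjoint_family_on (\<lambda>w. {\<omega>\<in>space M. R T \<omega> = k @\<^sub>v w} \<inter> Cz) UNIV"
        proof (unfold disjoint_family_on_def, intro ballI impI)
          fix w w' :: "int vec" assume "w \<in> UNIV" "w' \<in> UNIV" and ne: "w \<noteq> w'"
          have "k @\<^sub>v w \<noteq> k @\<^sub>v w'"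
          proof
            assume eq: "k @\<^sub>v w = k @\<^sub>v w'"
            then have "dim_vec w = dim_vec w'" by (metis add_left_cancel index_append_vec(2))
            then have "vslice (k @\<^sub>v w) m1 (dim_vec w) = w" "vslice (k @\<^sub>v w') m1 (dim_vec w) = w'"
              using vslice_append2[OF kc] by (auto intro: carrier_vecI)
            then show False using eq ne by simp
          qed
          then show "({\<omega>\<in>space M. R T \<omega> = k @\<^sub>v w} \<inter> Cz) \<inter> ({\<omega>\<in>space M. R T \<omega> = k @\<^sub>v w'} \<inter> Cz) = {}"
            by auto
        qed
        have ev: "\<And>w. {\<omega>\<in>space M. R T \<omega> = k @\<^sub>v w} \<inter> Cz \<in> sets M"
          using ZRev Cz_sets by auto
        have "emeasure M ({\<omega>\<in>space M. vslice (R T \<omega>) 0 m1 = k} \<inter> Cz)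
            = (\<integral>\<^sup>+w. emeasure M ({\<omega>\<in>space M. R T \<omega> = k @\<^sub>v w} \<inter> Cz) \<partial>count_space UNIV)"
          unfolding un by (rule emeasure_UN_countable[OF ev]) (simp_all add: disj)
        also have "\<dots> = (\<integral>\<^sup>+w. ennreal (mpois (m1 + m2) (a z) (k @\<^sub>v w)) * ennreal (measure M Cz) \<partial>count_space UNIV)"
          using RK mpois_nonneg[OF a_nn[OF zin]]
          by (simp add: M.emeasure_eq_measure ennreal_mult measure_nonneg)
        also have "\<dots> = (\<integral>\<^sup>+w. ennreal (mpois (m1 + m2) (a z) (k @\<^sub>v w)) \<partial>count_space UNIV) * ennreal (measure M Cz)"
          by (rule nn_integral_multc) simp
        also have "\<dots> = ennreal (mpois m1 (a z) k * measure M Cz)"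
          using marg[OF True a_nn[OF zin]] by (simp add: ennreal_mult measure_nonneg mpois_nonneg a_nn zin)
        finally have em: "emeasure M ({\<omega>\<in>space M. vslice (R T \<omega>) 0 m1 = k} \<inter> Cz) = ennreal (mpois m1 (a z) k * measure M Cz)" .
        have "mpois m1 (a z) k \<ge> 0" using a_nn[OF zin] by (intro mpois_nonneg) auto
        then have "measure M ({\<omega>\<in>space M. vslice (R T \<omega>) 0 m1 = k} \<inter> Cz) = mpois m1 (a z) k * measure M Cz"
          using em by (simp add: M.emeasure_eq_measure measure_nonneg)
        then show ?thesis unfolding OHs using mCz by simp
      qed
    qed
    then show "P.prob {\<omega>\<in>space M. Z0 \<omega> = z \<and> vslice (R T \<omega>) 0 m1 = k} = pmf \<mu> z * mpois m1 (a z) k"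
      using Pr[OF Hs_sets] c_pos by (simp add: Hs_def)
  qed
  have Xlaw: "\<And>i z k. P.prob {\<omega>\<in>space M. U0 i \<omega> @\<^sub>v V0 i \<omega> = z \<and> Kp i \<omega> = k} = pmf \<mu> z * mpois m1 (a z) k"
  proof -
    fix i z k
    define Hs where "Hs = {\<omega>\<in>space M. U0 i \<omega> @\<^sub>v V0 i \<omega> = z \<and> Kp i \<omega> = k}"
    have Hs_sets: "Hs \<in> sets M" unfolding Hs_def using Wev[of "\<lambda>u v kk. u @\<^sub>v v = z \<and> kk = k" i] by simp
    have "measure M (Op \<inter> Hs) = c * (pmf \<mu> z * mpois m1 (a z) k)"
    proof (cases "z \<in> nnvecs (n1 + n2)")
      case False
      have "Hs = {}" unfolding Hs_def using False filt_vals append_nnvecs by blast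
      moreover have "pmf \<mu> z = 0" using False mu_supp by (auto simp: set_pmf_iff)
      ultimately show ?thesis by simp
    next
      case True
      define x where "x = vslice z 0 n1"
      define v where "v = vslice z n1 n2"
      have xv: "x \<in> nnvecs n1" "v \<in> nnvecs n2" using vslice_nnvecs[OF True] by (auto simp: x_def v_def)
      have zxv: "z = x @\<^sub>v v" unfolding x_def v_def by (rule vslice_split[OF nnvecs_carrier[OF True], symmetric])
      define Cx where "Cx = Op \<inter> {\<omega>\<in>space M. U0 i \<omega> = x \<and> V0 i \<omega> = v}"
      have Cx_sets: "Cx \<in> sets M" unfolding Cx_def using Op_ev Wev[of "\<lambda>u vv kk. u = x \<and> vv = v" i] by auto
      have mCx: "measure M Cx = c * pmf \<mu> z"
      proof -
        have "measure M ({\<omega>\<in>space M. U0 i \<omega> = x \<and> V0 i \<omega> = v} \<inter> Op) / c = pmf \<mu> z"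
          using UV_law[OF xv, of i] zxv by (simp add: cprob_def c_def)
        then show ?thesis using c_pos by (simp add: Cx_def Int_commute field_simps)
      qed
      have OHs: "Op \<inter> Hs = {\<omega>\<in>space M. Kp i \<omega> = k} \<inter> Cx"
      proof (intro equalityI subsetI)
        fix \<omega> assume "\<omega> \<in> Op \<inter> Hs"
        then have om: "\<omega> \<in> Op" "\<omega> \<in> space M" "U0 i \<omega> @\<^sub>v V0 i \<omega> = x @\<^sub>v v" "Kp i \<omega> = k"
          using zxv by (auto simp: Hs_def)
        have uc: "U0 i \<omega> \<in> carrier_vec n1" "V0 i \<omega> \<in> carrier_vec n2"
          using filt_vals[OF om(2)] nnvecs_carrier by auto
        have xc: "x \<in> carrier_vec n1" "v \<in> carrier_vec n2" using xv nnvecs_carrier by auto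
        have "U0 i \<omega> = x" using vslice_append1[OF uc(1), of "V0 i \<omega>"] vslice_append1[OF xc(1), of v] om(3) by simp
        moreover have "V0 i \<omega> = v" using vslice_append2[OF uc] vslice_append2[OF xc] om(3) by metis
        ultimately show "\<omega> \<in> {\<omega>\<in>space M. Kp i \<omega> = k} \<inter> Cx" using om by (simp add: Cx_def)
      next
        fix \<omega> assume "\<omega> \<in> {\<omega>\<in>space M. Kp i \<omega> = k} \<inter> Cx"
        then show "\<omega> \<in> Op \<inter> Hs" using zxv by (auto simp: Hs_def Cx_def)
      qed
      show ?thesis
      proof (cases "measure M Cx = 0")
        case True
        have "measure M (Op \<inter> Hs) \<le> measure M Cx"
          unfolding OHs by (rule M.finite_measure_mono) (auto simp: Cx_sets)
        then have "measure M (Op \<inter> Hs) = 0" using True by (simp add: measure_nonneg antisym)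
        moreover have "pmf \<mu> z = 0" using True mCx c_pos by simp
        ultimately show ?thesis by simp
      next
        case False
        then have Cpos: "measure M Cx > 0" by (simp add: zero_less_measure_iff)
        have "cprob M {\<omega>\<in>space M. Kp i \<omega> = k} Cx = mpois m1 (a z) k"
          using K_law[OF xv, of i k] Cpos zxv by (simp add: Cx_def a_def)
        then have "measure M ({\<omega>\<in>space M. Kp i \<omega> = k} \<inter> Cx) = mpois m1 (a z) k * measure M Cx"
          using Cpos by (simp add: cprob_def field_simps)
        then show ?thesis unfolding OHs using mCx by simp
      qed
    qed
    then show "P.prob {\<omega>\<in>space M. U0 i \<omega> @\<^sub>v V0 i \<omega> = z \<and> Kp i \<omega> = k} = pmf \<mu> z * mpois m1 (a z) k"
      using Pr[OF Hs_sets] c_pos by (simp add: Hs_def)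
  qed
  have mcs: "\<And>N. measurable P N = measurable M N" by (rule measurable_cong_sets[OF sP(1) refl])
  have Xm: "\<And>i. (\<lambda>\<omega>. (U0 i \<omega> @\<^sub>v V0 i \<omega>, Kp i \<omega>)) \<in> P \<rightarrow>\<^sub>M count_space UNIV"
  proof -
    fix i
    have "(\<lambda>\<omega>. (\<lambda>t. (fst t @\<^sub>v fst (snd t), snd (snd t))) (U0 i \<omega>, V0 i \<omega>, Kp i \<omega>)) \<in> M \<rightarrow>\<^sub>M count_space UNIV"
      by (rule measurable_compose[OF Wm measurable_count_space])
    then show "(\<lambda>\<omega>. (U0 i \<omega> @\<^sub>v V0 i \<omega>, Kp i \<omega>)) \<in> P \<rightarrow>\<^sub>M count_space UNIV" by (simp add: mcs)
  qed
  have Ym: "(\<lambda>\<omega>. (Z0 \<omega>, vslice (R T \<omega>) 0 m1)) \<in> P \<rightarrow>\<^sub>M count_space UNIV"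
  proof -
    have "(\<lambda>\<omega>. (\<lambda>t. (fst t, vslice (snd t) 0 m1)) (Z0 \<omega>, R T \<omega>)) \<in> M \<rightarrow>\<^sub>M count_space UNIV"
      by (rule measurable_compose[OF ZRm measurable_count_space])
    then show ?thesis by (simp add: mcs)
  qed
  have LAW: "\<And>i A. P.prob {\<omega>\<in>space M. (U0 i \<omega> @\<^sub>v V0 i \<omega>, Kp i \<omega>) \<in> A}
                  = P.prob {\<omega>\<in>space M. (Z0 \<omega>, vslice (R T \<omega>) 0 m1) \<in> A}"
  proof -
    fix i A
    have "emeasure P {\<omega>\<in>space P. (U0 i \<omega> @\<^sub>v V0 i \<omega>, Kp i \<omega>) \<in> A}
        = emeasure P {\<omega>\<in>space P. (Z0 \<omega>, vslice (R T \<omega>) 0 m1) \<in> A}"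
    proof (rule law_eq[OF Xm Ym])
      fix cc :: "int vec \<times> int vec"
      obtain z k where cc: "cc = (z, k)" by (cases cc)
      have "measure P {\<omega>\<in>space P. (U0 i \<omega> @\<^sub>v V0 i \<omega>, Kp i \<omega>) = cc}
          = measure P {\<omega>\<in>space P. (Z0 \<omega>, vslice (R T \<omega>) 0 m1) = cc}"
        using Xlaw[of i z k] Ylaw[of z k] by (simp add: cc sP)
      then show "emeasure P {\<omega>\<in>space P. (U0 i \<omega> @\<^sub>v V0 i \<omega>, Kp i \<omega>) = cc}
          = emeasure P {\<omega>\<in>space P. (Z0 \<omega>, vslice (R T \<omega>) 0 m1) = cc}"
        by (simp add: P.emeasure_eq_measure)
    qed
    then show "P.prob {\<omega>\<in>space M. (U0 i \<omega> @\<^sub>v V0 i \<omega>, Kp i \<omega>) \<in> A}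
                  = P.prob {\<omega>\<in>space M. (Z0 \<omega>, vslice (R T \<omega>) 0 m1) \<in> A}"
      by (simp add: measure_def sP)
  qed
  have VV: "\<And>i \<omega>. \<omega> \<in> space M \<Longrightarrow> vslice (U0 i \<omega> @\<^sub>v V0 i \<omega>) n1 n2 = V0 i \<omega>"
  proof -
    fix i \<omega> assume "\<omega> \<in> space M"
    then have "U0 i \<omega> \<in> carrier_vec n1" "V0 i \<omega> \<in> carrier_vec n2" using filt_vals nnvecs_carrier by blast+
    then show "vslice (U0 i \<omega> @\<^sub>v V0 i \<omega>) n1 n2 = V0 i \<omega>" by (rule vslice_append2)
  qed
  define SS where "SS dy = Sset n1 n2 m1 m2 \<nu> dy" for dy
  define Oy where "Oy = {\<omega>\<in>space M. vslice (Z0 \<omega>) n1 n2 + nu2 n1 n2 (m1 + m2) \<nu> *\<^sub>v R T \<omega> = y}"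
  have Oy_sets: "Oy \<in> sets M"
    using ZRev[of "\<lambda>zz r. vslice zz n1 n2 + nu2 n1 n2 (m1 + m2) \<nu> *\<^sub>v r = y"] by (simp add: Oy_def)
  define Dset where "Dset = {\<omega>\<in>space M. vslice (R T \<omega>) 0 m1 \<in> SS (y - vslice (Z0 \<omega>) n1 n2)}"
  have Dset_sets: "Dset \<in> sets M"
    using ZRev[of "\<lambda>zz r. vslice r 0 m1 \<in> SS (y - vslice zz n1 n2)"] by (simp add: Dset_def)
  define D where "D = P.prob Dset"
  define Sg where "Sg i = {\<omega>\<in>space M. Kp i \<omega> \<in> SS (y - V0 i \<omega>)}" for i
  have Sg_sets: "\<And>i. Sg i \<in> sets M"
    unfolding Sg_def using Wev[of "\<lambda>u v kk. kk \<in> SS (y - v)"] by simp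
  have Sg_prob: "\<And>i. P.prob (Sg i) = D"
  proof -
    fix i
    define SA where "SA = {p :: int vec \<times> int vec. snd p \<in> SS (y - vslice (fst p) n1 n2)}"
    have "Sg i = {\<omega>\<in>space M. (U0 i \<omega> @\<^sub>v V0 i \<omega>, Kp i \<omega>) \<in> SA}"
      by (auto simp: SA_def Sg_def VV)
    moreover have "Dset = {\<omega>\<in>space M. (Z0 \<omega>, vslice (R T \<omega>) 0 m1) \<in> SA}" by (simp add: Dset_def SA_def)
    ultimately show "P.prob (Sg i) = D" using LAW[of i SA] by (simp add: D_def)
  qed
  define Hset where "Hset = {\<omega>\<in>space M. Z0 \<omega> = z0 \<and> vslice (R T \<omega>) 0 m1 = k'}"
  define ind where "ind = (indicator (SS (y - vslice z0 n1 n2)) k' :: real)"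
  define pp where "pp = ind * P.prob Hset"
  define Fv where "Fv i = {\<omega>\<in>space M. Kp i \<omega> \<in> SS (y - V0 i \<omega>) \<and> U0 i \<omega> @\<^sub>v V0 i \<omega> = z0 \<and> Kp i \<omega> = k'}" for i
  have Fv_sets: "\<And>i. Fv i \<in> sets M"
    unfolding Fv_def using Wev[of "\<lambda>u v kk. kk \<in> SS (y - v) \<and> u @\<^sub>v v = z0 \<and> kk = k'"] by simp
  have Fv_prob: "\<And>i. P.prob (Fv i) = pp"
  proof -
    fix i
    define FA where "FA = {p :: int vec \<times> int vec. snd p \<in> SS (y - vslice (fst p) n1 n2) \<and> fst p = z0 \<and> snd p = k'}"
    have "Fv i = {\<omega>\<in>space M. (U0 i \<omega> @\<^sub>v V0 i \<omega>, Kp i \<omega>) \<in> FA}"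
      by (auto simp: FA_def Fv_def VV)
    then have "P.prob (Fv i) = P.prob {\<omega>\<in>space M. (Z0 \<omega>, vslice (R T \<omega>) 0 m1) \<in> FA}"
      using LAW[of i FA] by simp
    also have "{\<omega>\<in>space M. (Z0 \<omega>, vslice (R T \<omega>) 0 m1) \<in> FA}
        = (if k' \<in> SS (y - vslice z0 n1 n2) then Hset else {})"
      by (auto simp: FA_def Hset_def)
    also have "P.prob \<dots> = pp" by (simp add: pp_def ind_def)
    finally show "P.prob (Fv i) = pp" .
  qed
  have POy: "P.prob Oy > 0"
    using Pr[OF Oy_sets] O_pos c_pos by (simp add: Oy_def)
  have OyD: "Oy \<subseteq> Dset"
  proof
    fix \<omega> assume "\<omega> \<in> Oy"
    then have sp: "\<omega> \<in> space M" and eq: "vslice (Z0 \<omega>) n1 n2 + nu2 n1 n2 (m1 + m2) \<nu> *\<^sub>v R T \<omega> = y"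
      by (auto simp: Oy_def)
    have c1: "vslice (Z0 \<omega>) n1 n2 \<in> carrier_vec n2" by (rule carrier_vecI) (simp add: vslice_def)
    have c2: "nu2 n1 n2 (m1 + m2) \<nu> *\<^sub>v R T \<omega> \<in> carrier_vec n2"
      by (rule carrier_vecI) (simp add: nu2_def mslice_def)
    have "y - vslice (Z0 \<omega>) n1 n2 = nu2 n1 n2 (m1 + m2) \<nu> *\<^sub>v R T \<omega>"
      using add_minus_cancel_vec[OF c1 c2] eq by simp
    then show "\<omega> \<in> Dset" using S_mem[OF dims B_inv nu_dim RTnn[OF sp]] sp by (simp add: Dset_def SS_def)
  qed
  have Dpos: "D > 0"
  proof -
    have "P.prob Oy \<le> P.prob Dset" by (rule P.finite_measure_mono[OF OyD]) (simp add: sP Dset_sets)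
    then show ?thesis using POy by (simp add: D_def)
  qed
  have D1: "D \<le> 1" by (simp add: D_def)
  define NN where "NN = (count_space UNIV \<Otimes>\<^sub>M (\<Pi>\<^sub>M t\<in>{0..T}. count_space UNIV) :: (int vec \<times> (real \<Rightarrow> int vec)) measure)"
  define GG where "GG = (\<lambda>\<omega>. (Z0 \<omega>, restrict (\<lambda>t. R t \<omega>) {0..T}))"
  have indep: "P.indep_sets (\<lambda>j. case j of
                   Some i \<Rightarrow> sets (vimage_algebra (space M) (\<lambda>\<omega>. (U0 i \<omega>, V0 i \<omega>, Kp i \<omega>))
                                    (count_space UNIV))
                 | None \<Rightarrow> sets (vimage_algebra (space M) GG NN)) UNIV"
    using filt_indep unfolding P_def GG_def NN_def .
  have IND: "\<And>n Bs B. B \<in> sets NN \<Longrightarrow>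
     P.prob ({\<omega>\<in>space M. \<forall>i\<le>n. (U0 i \<omega>, V0 i \<omega>, Kp i \<omega>) \<in> Bs i} \<inter> (GG -` B \<inter> space M))
     = (\<Prod>i\<le>n. P.prob {\<omega>\<in>space M. (U0 i \<omega>, V0 i \<omega>, Kp i \<omega>) \<in> Bs i}) * P.prob (GG -` B \<inter> space M)"
  proof -
    fix n Bs B assume B: "B \<in> sets NN"
    define A where "A j = (case j of None \<Rightarrow> GG -` B \<inter> space M
                         | Some i \<Rightarrow> (\<lambda>\<omega>. (U0 i \<omega>, V0 i \<omega>, Kp i \<omega>)) -` Bs i \<inter> space M)" for j
    define J where "J = (insert None (Some ` {..n}) :: nat option set)"
    have "P.prob (\<Inter>j\<in>J. A j) = (\<Prod>j\<in>J. P.prob (A j))"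
      by (rule P.indep_setsD[OF indep]) (auto simp: J_def A_def B intro!: in_vimage_algebra)
    moreover have "(\<Inter>j\<in>J. A j) = {\<omega>\<in>space M. \<forall>i\<le>n. (U0 i \<omega>, V0 i \<omega>, Kp i \<omega>) \<in> Bs i} \<inter> (GG -` B \<inter> space M)"
      by (auto simp: J_def A_def)
    moreover have "(\<Prod>j\<in>J. P.prob (A j))
        = (\<Prod>i\<le>n. P.prob {\<omega>\<in>space M. (U0 i \<omega>, V0 i \<omega>, Kp i \<omega>) \<in> Bs i}) * P.prob (GG -` B \<inter> space M)"
    proof -
      have "(\<Prod>j\<in>J. P.prob (A j)) = P.prob (A None) * (\<Prod>j\<in>Some ` {..n}. P.prob (A j))"
        unfolding J_def by (rule prod.insert) auto
      also have "(\<Prod>j\<in>Some ` {..n}. P.prob (A j)) = (\<Prod>i\<le>n. P.prob (A (Some i)))"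
        by (simp add: prod.reindex inj_on_def)
      also have "(\<Prod>i\<le>n. P.prob (A (Some i))) = (\<Prod>i\<le>n. P.prob {\<omega>\<in>space M. (U0 i \<omega>, V0 i \<omega>, Kp i \<omega>) \<in> Bs i})"
      proof (rule prod.cong[OF refl])
        fix i
        have "A (Some i) = {\<omega>\<in>space M. (U0 i \<omega>, V0 i \<omega>, Kp i \<omega>) \<in> Bs i}" by (auto simp: A_def)
        then show "P.prob (A (Some i)) = P.prob {\<omega>\<in>space M. (U0 i \<omega>, V0 i \<omega>, Kp i \<omega>) \<in> Bs i}" by simp
      qed
      finally show ?thesis by (simp add: A_def mult.commute)
    qed
    ultimately show "P.prob ({\<omega>\<in>space M. \<forall>i\<le>n. (U0 i \<omega>, V0 i \<omega>, Kp i \<omega>) \<in> Bs i} \<inter> (GG -` B \<inter> space M))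
     = (\<Prod>i\<le>n. P.prob {\<omega>\<in>space M. (U0 i \<omega>, V0 i \<omega>, Kp i \<omega>) \<in> Bs i}) * P.prob (GG -` B \<inter> space M)"
      by simp
  qed
  have GG_sp: "\<And>\<omega>. \<omega> \<in> space M \<Longrightarrow> GG \<omega> \<in> space NN"
    by (simp add: GG_def NN_def space_pair_measure space_PiM)
  have fstm: "fst \<in> NN \<rightarrow>\<^sub>M count_space UNIV" unfolding NN_def by (rule measurable_fst)
  have sndm: "(\<lambda>p. snd p T) \<in> NN \<rightarrow>\<^sub>M count_space UNIV"
    unfolding NN_def by (rule measurable_compose[OF measurable_snd measurable_component_singleton]) (use T0 in simp)
  define BO where "BO = {p\<in>space NN. vslice (fst p) n1 n2 + nu2 n1 n2 (m1 + m2) \<nu> *\<^sub>v snd p T = y}"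
  have BO_sets: "BO \<in> sets NN"
    using pred_count[OF pair_count[OF fstm sndm], of "\<lambda>q. vslice (fst q) n1 n2 + nu2 n1 n2 (m1 + m2) \<nu> *\<^sub>v snd q = y"]
    by (simp add: BO_def)
  have GO: "GG -` BO \<inter> space M = Oy" using GG_sp T0 by (auto simp: BO_def Oy_def GG_def)
  have GS: "GG -` space NN \<inter> space M = space M" using GG_sp by auto
  have IND2: "\<And>n Bs. P.prob {\<omega>\<in>space M. \<forall>i\<le>n. (U0 i \<omega>, V0 i \<omega>, Kp i \<omega>) \<in> Bs i}
     = (\<Prod>i\<le>n. P.prob {\<omega>\<in>space M. (U0 i \<omega>, V0 i \<omega>, Kp i \<omega>) \<in> Bs i})"
  proof -
    fix n Bs
    have "P.prob ({\<omega>\<in>space M. \<forall>i\<le>n. (U0 i \<omega>, V0 i \<omega>, Kp i \<omega>) \<in> Bs i} \<inter> (GG -` space NN \<inter> space M))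
     = (\<Prod>i\<le>n. P.prob {\<omega>\<in>space M. (U0 i \<omega>, V0 i \<omega>, Kp i \<omega>) \<in> Bs i}) * P.prob (GG -` space NN \<inter> space M)"
      by (rule IND) simp
    moreover have "P.prob (space M) = 1" using P.prob_space sP by simp
    ultimately show "P.prob {\<omega>\<in>space M. \<forall>i\<le>n. (U0 i \<omega>, V0 i \<omega>, Kp i \<omega>) \<in> Bs i}
     = (\<Prod>i\<le>n. P.prob {\<omega>\<in>space M. (U0 i \<omega>, V0 i \<omega>, Kp i \<omega>) \<in> Bs i})"
      unfolding GS by (simp add: Int_absorb2 subset_iff)
  qed
  define SB where "SB = {t :: int vec \<times> int vec \<times> int vec. snd (snd t) \<in> SS (y - fst (snd t))}"
  define FB where "FB = {t :: int vec \<times> int vec \<times> int vec. snd (snd t) \<in> SS (y - fst (snd t)) \<and> fst t @\<^sub>v fst (snd t) = z0 \<and> snd (snd t) = k'}"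
  have pSB: "\<And>i. P.prob {\<omega>\<in>space M. (U0 i \<omega>, V0 i \<omega>, Kp i \<omega>) \<in> - SB} = 1 - D"
  proof -
    fix i
    have "{\<omega>\<in>space M. (U0 i \<omega>, V0 i \<omega>, Kp i \<omega>) \<in> - SB} = space P - Sg i"
      unfolding sP SB_def Sg_def by auto
    then show "P.prob {\<omega>\<in>space M. (U0 i \<omega>, V0 i \<omega>, Kp i \<omega>) \<in> - SB} = 1 - D"
      using P.prob_compl[of "Sg i"] Sg_sets Sg_prob sP by simp
  qed
  have pFB: "\<And>i. P.prob {\<omega>\<in>space M. (U0 i \<omega>, V0 i \<omega>, Kp i \<omega>) \<in> FB} = pp"
  proof -
    fix i
    have "{\<omega>\<in>space M. (U0 i \<omega>, V0 i \<omega>, Kp i \<omega>) \<in> FB} = Fv i" unfolding FB_def Fv_def by simp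
    then show "P.prob {\<omega>\<in>space M. (U0 i \<omega>, V0 i \<omega>, Kp i \<omega>) \<in> FB} = pp" using Fv_prob by simp
  qed
  define Bn where "Bn n i = (if i < n then - SB else FB)" for n i :: nat
  define En where "En n = {\<omega>\<in>space M. \<forall>i\<le>n. (U0 i \<omega>, V0 i \<omega>, Kp i \<omega>) \<in> Bn n i}" for n
  have prodE: "\<And>n. (\<Prod>i\<le>n. P.prob {\<omega>\<in>space M. (U0 i \<omega>, V0 i \<omega>, Kp i \<omega>) \<in> Bn n i}) = (1 - D) ^ n * pp"
  proof -
    fix n
    have "(\<Prod>i\<le>n. P.prob {\<omega>\<in>space M. (U0 i \<omega>, V0 i \<omega>, Kp i \<omega>) \<in> Bn n i})
        = (\<Prod>i<Suc n. P.prob {\<omega>\<in>space M. (U0 i \<omega>, V0 i \<omega>, Kp i \<omega>) \<in> Bn n i})"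
      by (simp add: lessThan_Suc_atMost)
    also have "\<dots> = (\<Prod>i<n. P.prob {\<omega>\<in>space M. (U0 i \<omega>, V0 i \<omega>, Kp i \<omega>) \<in> Bn n i})
                   * P.prob {\<omega>\<in>space M. (U0 n \<omega>, V0 n \<omega>, Kp n \<omega>) \<in> Bn n n}"
      by (rule prod.lessThan_Suc)
    also have "(\<Prod>i<n. P.prob {\<omega>\<in>space M. (U0 i \<omega>, V0 i \<omega>, Kp i \<omega>) \<in> Bn n i}) = (\<Prod>i<n. 1 - D)"
      by (rule prod.cong[OF refl]) (use pSB in \<open>simp add: Bn_def\<close>)
    also have "P.prob {\<omega>\<in>space M. (U0 n \<omega>, V0 n \<omega>, Kp n \<omega>) \<in> Bn n n} = pp" by (simp add: Bn_def pFB)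
    finally show "(\<Prod>i\<le>n. P.prob {\<omega>\<in>space M. (U0 i \<omega>, V0 i \<omega>, Kp i \<omega>) \<in> Bn n i}) = (1 - D) ^ n * pp"
      by simp
  qed
  have pE: "\<And>n. P.prob (En n \<inter> Oy) = (1 - D) ^ n * pp * P.prob Oy"
  proof -
    fix n
    show "P.prob (En n \<inter> Oy) = (1 - D) ^ n * pp * P.prob Oy"
      using IND[OF BO_sets, of n "Bn n"] prodE[of n] unfolding GO by (simp add: En_def)
  qed
  have AllEv: "\<And>n (B :: nat \<Rightarrow> (int vec \<times> int vec \<times> int vec) set).
      {\<omega>\<in>space M. \<forall>i\<le>n. (U0 i \<omega>, V0 i \<omega>, Kp i \<omega>) \<in> B i} \<in> sets M"
  proof -
    fix n and B :: "nat \<Rightarrow> (int vec \<times> int vec \<times> int vec) set"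
    have "{\<omega>\<in>space M. \<forall>i. i \<le> n \<longrightarrow> (U0 i \<omega>, V0 i \<omega>, Kp i \<omega>) \<in> B i} \<in> sets M"
    proof (rule sets.sets_Collect_countable_All)
      fix i
      show "{\<omega>\<in>space M. i \<le> n \<longrightarrow> (U0 i \<omega>, V0 i \<omega>, Kp i \<omega>) \<in> B i} \<in> sets M"
      proof (cases "i \<le> n")
        case True then show ?thesis using Wev[of "\<lambda>u v kk. (u, v, kk) \<in> B i" i] by simp
      next
        case False
        then have "{\<omega>\<in>space M. i \<le> n \<longrightarrow> (U0 i \<omega>, V0 i \<omega>, Kp i \<omega>) \<in> B i} = space M" by blast
        then show ?thesis by (simp only: sets.top)
      qed
    qed
    then show "{\<omega>\<in>space M. \<forall>i\<le>n. (U0 i \<omega>, V0 i \<omega>, Kp i \<omega>) \<in> B i} \<in> sets M" .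
  qed
  have En_sets: "\<And>n. En n \<in> sets M" unfolding En_def by (rule AllEv)
  define Never where "Never = {\<omega>\<in>space M. \<forall>i. Kp i \<omega> \<notin> SS (y - V0 i \<omega>)}"
  have Never_sets: "Never \<in> sets M"
    unfolding Never_def
    by (rule sets.sets_Collect_countable_All) (use Wev[of "\<lambda>u v kk. kk \<notin> SS (y - v)"] in simp)
  have Never0: "P.prob Never = 0"
  proof -
    have "P.prob Never \<le> (1 - D) ^ n * (1 - D)" for n
    proof -
      have sub: "Never \<subseteq> {\<omega>\<in>space M. \<forall>i\<le>n. (U0 i \<omega>, V0 i \<omega>, Kp i \<omega>) \<in> (\<lambda>_. - SB) i}"
      proof
        fix \<omega> assume "\<omega> \<in> Never"
        then have sp: "\<omega> \<in> space M" and nv: "\<forall>i. Kp i \<omega> \<notin> SS (y - V0 i \<omega>)"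
          unfolding Never_def by blast+
        show "\<omega> \<in> {\<omega>\<in>space M. \<forall>i\<le>n. (U0 i \<omega>, V0 i \<omega>, Kp i \<omega>) \<in> (\<lambda>_. - SB) i}"
        proof (intro CollectI conjI allI impI)
          show "\<omega> \<in> space M" by (rule sp)
          fix i
          have "Kp i \<omega> \<notin> SS (y - V0 i \<omega>)" using nv by blast
          then show "(U0 i \<omega>, V0 i \<omega>, Kp i \<omega>) \<in> (\<lambda>_. - SB) i"
            unfolding SB_def by (simp only: Compl_iff mem_Collect_eq snd_conv fst_conv not_False_eq_True)
        qed
      qed
      have Bs: "{\<omega>\<in>space M. \<forall>i\<le>n. (U0 i \<omega>, V0 i \<omega>, Kp i \<omega>) \<in> (\<lambda>_. - SB) i} \<in> sets P"
        unfolding sP(1) by (rule AllEv)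
      have "P.prob Never \<le> P.prob {\<omega>\<in>space M. \<forall>i\<le>n. (U0 i \<omega>, V0 i \<omega>, Kp i \<omega>) \<in> (\<lambda>_. - SB) i}"
        by (rule P.finite_measure_mono[OF sub Bs])
      also have "\<dots> = (\<Prod>i\<le>n. P.prob {\<omega>\<in>space M. (U0 i \<omega>, V0 i \<omega>, Kp i \<omega>) \<in> - SB})"
        by (rule IND2)
      also have "\<dots> = (\<Prod>i\<le>n. 1 - D)" by (rule prod.cong[OF refl]) (rule pSB)
      also have "\<dots> = (1 - D) ^ n * (1 - D)" by simp
      finally show ?thesis .
    qed
    then have "P.prob Never \<le> 0" by (rule geom_le_zero) (use Dpos D1 in auto)
    then show ?thesis using measure_nonneg[of P Never] by simp
  qed
  define E where "E = {\<omega>\<in>space M.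
              (let N = (LEAST i. Kp i \<omega> \<in> Sset n1 n2 m1 m2 \<nu> (y - V0 i \<omega>))
               in U0 N \<omega> @\<^sub>v V0 N \<omega> = z0 \<and> Kp N \<omega> = k')}"
  have EU: "(\<Union>n. En n \<inter> Oy) \<subseteq> E \<inter> Oy"
  proof
    fix \<omega> assume "\<omega> \<in> (\<Union>n. En n \<inter> Oy)"
    then obtain n where om: "\<omega> \<in> En n" "\<omega> \<in> Oy" by auto
    have sp: "\<omega> \<in> space M" using om by (simp add: En_def)
    have all: "\<forall>i\<le>n. (U0 i \<omega>, V0 i \<omega>, Kp i \<omega>) \<in> Bn n i" using om(1) by (simp add: En_def)
    have fb: "(U0 n \<omega>, V0 n \<omega>, Kp n \<omega>) \<in> FB" using all[rule_format, of n] by (simp add: Bn_def)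
    have nb: "\<And>i. i < n \<Longrightarrow> Kp i \<omega> \<notin> SS (y - V0 i \<omega>)"
    proof -
      fix i assume i: "i < n"
      then have "(U0 i \<omega>, V0 i \<omega>, Kp i \<omega>) \<in> Bn n i" using all by simp
      then show "Kp i \<omega> \<notin> SS (y - V0 i \<omega>)" using i by (simp add: Bn_def SB_def)
    qed
    have fbc: "Kp n \<omega> \<in> SS (y - V0 n \<omega>) \<and> U0 n \<omega> @\<^sub>v V0 n \<omega> = z0 \<and> Kp n \<omega> = k'"
      using fb unfolding FB_def mem_Collect_eq fst_conv snd_conv by assumption
    have fb1: "Kp n \<omega> \<in> SS (y - V0 n \<omega>)" and fb2: "U0 n \<omega> @\<^sub>v V0 n \<omega> = z0" and fb3: "Kp n \<omega> = k'"
      using fbc by blast+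
    have L: "(LEAST i. Kp i \<omega> \<in> Sset n1 n2 m1 m2 \<nu> (y - V0 i \<omega>)) = n"
    proof (rule Least_equality)
      show "Kp n \<omega> \<in> Sset n1 n2 m1 m2 \<nu> (y - V0 n \<omega>)" using fb1 by (simp only: SS_def)
      fix m assume "Kp m \<omega> \<in> Sset n1 n2 m1 m2 \<nu> (y - V0 m \<omega>)"
      then show "n \<le> m" using nb by (metis SS_def not_le)
    qed
    show "\<omega> \<in> E \<inter> Oy" using L fb2 fb3 sp om(2) by (simp add: E_def)
  qed
  have EN: "E \<inter> Oy \<subseteq> (\<Union>n. En n \<inter> Oy) \<union> Never"
  proof
    fix \<omega> assume om: "\<omega> \<in> E \<inter> Oy"
    then have sp: "\<omega> \<in> space M" by (simp add: E_def)
    show "\<omega> \<in> (\<Union>n. En n \<inter> Oy) \<union> Never"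
    proof (cases "\<exists>i. Kp i \<omega> \<in> SS (y - V0 i \<omega>)")
      case False then show ?thesis using sp by (simp add: Never_def)
    next
      case True
      define n where "n = (LEAST i. Kp i \<omega> \<in> Sset n1 n2 m1 m2 \<nu> (y - V0 i \<omega>))"
      have sn: "Kp n \<omega> \<in> SS (y - V0 n \<omega>)" unfolding n_def SS_def by (rule LeastI_ex) (use True SS_def in simp)
      have nb: "\<And>i. i < n \<Longrightarrow> Kp i \<omega> \<notin> SS (y - V0 i \<omega>)" unfolding n_def SS_def by (rule not_less_Least)
      have e: "U0 n \<omega> @\<^sub>v V0 n \<omega> = z0 \<and> Kp n \<omega> = k'" using om by (simp add: E_def n_def Let_def)
      have "\<forall>i\<le>n. (U0 i \<omega>, V0 i \<omega>, Kp i \<omega>) \<in> Bn n i"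
      proof (intro allI impI)
        fix i assume i: "i \<le> n"
        show "(U0 i \<omega>, V0 i \<omega>, Kp i \<omega>) \<in> Bn n i"
        proof (cases "i < n")
          case True then show ?thesis using nb[OF True] by (simp add: Bn_def SB_def)
        next
          case False then have "i = n" using i by simp
          then show ?thesis using sn e by (simp add: Bn_def FB_def)
        qed
      qed
      then have "\<omega> \<in> En n" using sp by (simp add: En_def)
      then show ?thesis using om by auto
    qed
  qed
  have EOy_sets: "E \<inter> Oy \<in> sets M"
  proof -
    define L0 where "L0 = (LEAST i::nat. False)"
    have "E \<inter> Oy = (\<Union>n. En n \<inter> Oy) \<union> (Never \<inter> Oy \<inter> {\<omega>\<in>space M. U0 L0 \<omega> @\<^sub>v V0 L0 \<omega> = z0 \<and> Kp L0 \<omega> = k'})"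
    proof (intro equalityI)
      show "E \<inter> Oy \<subseteq> (\<Union>n. En n \<inter> Oy) \<union> (Never \<inter> Oy \<inter> {\<omega>\<in>space M. U0 L0 \<omega> @\<^sub>v V0 L0 \<omega> = z0 \<and> Kp L0 \<omega> = k'})"
      proof
        fix \<omega> assume om: "\<omega> \<in> E \<inter> Oy"
        show "\<omega> \<in> (\<Union>n. En n \<inter> Oy) \<union> (Never \<inter> Oy \<inter> {\<omega>\<in>space M. U0 L0 \<omega> @\<^sub>v V0 L0 \<omega> = z0 \<and> Kp L0 \<omega> = k'})"
        proof (cases "\<omega> \<in> Never")
          case False then show ?thesis using EN om by blast
        next
          case True
          then have "(\<lambda>i. Kp i \<omega> \<in> Sset n1 n2 m1 m2 \<nu> (y - V0 i \<omega>)) = (\<lambda>i. False)"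
            by (auto simp: Never_def SS_def)
          then show ?thesis using om True by (simp add: E_def L0_def Let_def)
        qed
      qed
    next
      show "(\<Union>n. En n \<inter> Oy) \<union> (Never \<inter> Oy \<inter> {\<omega>\<in>space M. U0 L0 \<omega> @\<^sub>v V0 L0 \<omega> = z0 \<and> Kp L0 \<omega> = k'}) \<subseteq> E \<inter> Oy"
      proof (intro Un_least EU subsetI)
        fix \<omega> assume om: "\<omega> \<in> Never \<inter> Oy \<inter> {\<omega>\<in>space M. U0 L0 \<omega> @\<^sub>v V0 L0 \<omega> = z0 \<and> Kp L0 \<omega> = k'}"
        then have "(\<lambda>i. Kp i \<omega> \<in> Sset n1 n2 m1 m2 \<nu> (y - V0 i \<omega>)) = (\<lambda>i. False)"
          by (auto simp: Never_def SS_def)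
        then show "\<omega> \<in> E \<inter> Oy" using om by (simp add: E_def L0_def Let_def)
      qed
    qed
    moreover have "{\<omega>\<in>space M. U0 L0 \<omega> @\<^sub>v V0 L0 \<omega> = z0 \<and> Kp L0 \<omega> = k'} \<in> sets M"
      using Wev[of "\<lambda>u v kk. u @\<^sub>v v = z0 \<and> kk = k'" L0] by simp
    ultimately show ?thesis using En_sets Oy_sets Never_sets by simp
  qed
  have notboth: "\<And>n m \<omega>. n < m \<Longrightarrow> \<omega> \<in> En n \<Longrightarrow> \<omega> \<in> En m \<Longrightarrow> False"
  proof -
    fix n m \<omega> assume nm: "n < m" and a: "\<omega> \<in> En n" and b: "\<omega> \<in> En m"
    have "(U0 n \<omega>, V0 n \<omega>, Kp n \<omega>) \<in> Bn n n" using a by (simp add: En_def)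
    then have "(U0 n \<omega>, V0 n \<omega>, Kp n \<omega>) \<in> FB" by (simp add: Bn_def)
    then have s1: "Kp n \<omega> \<in> SS (y - V0 n \<omega>)" unfolding FB_def mem_Collect_eq fst_conv snd_conv by blast
    have "(U0 n \<omega>, V0 n \<omega>, Kp n \<omega>) \<in> Bn m n" using b nm by (simp add: En_def)
    then have s2: "Kp n \<omega> \<notin> SS (y - V0 n \<omega>)" using nm by (simp add: Bn_def SB_def)
    show False using s1 s2 by simp
  qed
  have disj: "disjoint_family (\<lambda>n. En n \<inter> Oy)"
  proof (unfold disjoint_family_on_def, intro ballI impI)
    fix n m :: nat assume "n \<in> UNIV" "m \<in> UNIV" "n \<noteq> m"
    then have "n < m \<or> m < n" by auto
    then show "En n \<inter> Oy \<inter> (En m \<inter> Oy) = {}" using notboth by blast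
  qed
  have sums1: "(\<lambda>n. P.prob (En n \<inter> Oy)) sums P.prob (\<Union>n. En n \<inter> Oy)"
    by (rule P.finite_measure_UNION[OF _ disj]) (use En_sets Oy_sets sP in auto)
  have sums2: "(\<lambda>n. P.prob (En n \<inter> Oy)) sums (pp * P.prob Oy / D)"
  proof -
    have "(\<lambda>n. (1 - D) ^ n) sums (1 / (1 - (1 - D)))" by (rule geometric_sums) (use Dpos D1 in simp)
    then have "(\<lambda>n. (1 - D) ^ n * (pp * P.prob Oy)) sums (1 / (1 - (1 - D)) * (pp * P.prob Oy))"
      by (rule sums_mult2)
    then show ?thesis using pE by (simp add: mult.assoc)
  qed
  have PU: "P.prob (\<Union>n. En n \<inter> Oy) = pp * P.prob Oy / D" using sums_unique2[OF sums1 sums2] .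
  have PEO: "P.prob (E \<inter> Oy) = pp * P.prob Oy / D"
  proof -
    have U_sets: "(\<Union>n. En n \<inter> Oy) \<in> sets M" using En_sets Oy_sets by auto
    have "P.prob (\<Union>n. En n \<inter> Oy) \<le> P.prob (E \<inter> Oy)"
      by (rule P.finite_measure_mono[OF EU]) (unfold sP(1), rule EOy_sets)
    moreover have "P.prob (E \<inter> Oy) \<le> P.prob ((\<Union>n. En n \<inter> Oy) \<union> Never)"
      by (rule P.finite_measure_mono[OF EN]) (unfold sP(1), rule sets.Un[OF U_sets Never_sets])
    moreover have "P.prob ((\<Union>n. En n \<inter> Oy) \<union> Never) \<le> P.prob (\<Union>n. En n \<inter> Oy) + P.prob Never"
      by (rule measure_Un_le) (simp_all only: sP(1) U_sets Never_sets)
    ultimately show ?thesis using PU Never0 by simp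
  qed
  have LHS: "cprob M E (Op \<inter> Oy) = pp / D"
  proof -
    have "measure M (E \<inter> (Op \<inter> Oy)) = c * P.prob (E \<inter> Oy)"
      using Pr[OF EOy_sets] c_pos by (simp add: Int_ac)
    moreover have "measure M (Op \<inter> Oy) = c * P.prob Oy"
      using Pr[OF Oy_sets] c_pos by simp
    ultimately show ?thesis using PEO POy c_pos Dpos by (simp add: cprob_def)
  qed
  have RHS: "ind * cprob M Hset Op / cprob M Dset Op = pp / D"
  proof -
    have Hset_sets: "Hset \<in> sets M" using ZRev[of "\<lambda>zz r. zz = z0 \<and> vslice r 0 m1 = k'"] by (simp add: Hset_def)
    have "cprob M Hset Op = P.prob Hset" using Pr[OF Hset_sets] by (simp add: cprob_def c_def Int_commute)
    moreover have "cprob M Dset Op = D" using Pr[OF Dset_sets] by (simp add: cprob_def c_def Int_commute D_def)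
    ultimately show ?thesis by (simp add: pp_def)
  qed
  have "cprob M E (Op \<inter> Oy) = ind * cprob M Hset Op / cprob M Dset Op" using LHS RHS by simp
  then show ?thesis unfolding E_def Oy_def Hset_def Dset_def ind_def SS_def .
qed

end
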